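(* Let $G$ be the cube graph $Q_3$. Then $T_3(G)=6$.
   Context: Fix a set $\Sigma$ of symbols (bond-edge types) and a disjoint copy $\hat\Sigma=\{\hat a:a\in\Sigma\}$ with $\hat{\hat a}=a$; elements of $\Sigma\cup\hat\Sigma$ are cohesive-end types. A tile is a finite multiset of cohesive-end types. A pot is a finite set $P$ of tiles such that whenever $x$ occurs in a tile of $P$, $\hat x$ occurs in some tile of $P$; $\#P$ is its number of tiles. Graphs are finite, loops and multiple edges allowed. An assembly design of a graph $H$ labels the half-edges of $H$ by cohesive-end types so that the two half-edges of each edge receive complementary labels $x,\hat x$; $t_v$ is the multiset of labels at $v$, $P_\lambda(H)=\{t_v\}$, and $P$ realizes $H$ ($H\in\mathcal{O}(P)$) if some assembly design $\lambda$ has $P_\lambda(H)\subseteq P$. $P$ realizes $G$ according to Scenario 3 if $G\in\mathcal{O}(P)$, every $H\in\mathcal{O}(P)$ has $\#V(H)\ge\#V(G)$, and every $H\in\mathcal{O}(P)$ with $\#V(H)=\#V(G)$ is isomorphic to $G$. $T_3(G)=\min\{\#P: P \text{ realizes } G \text{ according to Scenario 3}\}$. *)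

theory Defs
  imports Main "HOL-Library.Multiset"
begin

text \<open>Bond-edge types are natural numbers (a countably infinite supply Sigma).
  A cohesive-end type is a pair (a, h): h = False means a, h = True means hat a.\<close>

type_synonym cend = "nat \<times> bool"
type_synonym tile = "cend multiset"

definition hat :: "cend \<Rightarrow> cend" where
  "hat x = (fst x, \<not> snd x)"

definition is_pot :: "tile set \<Rightarrow> bool" where
  "is_pot P \<longleftrightarrow> finite P \<and>
     (\<forall>t\<in>P. \<forall>x. x \<in># t \<longrightarrow> (\<exists>t'\<in>P. hat x \<in># t'))"

text \<open>Finite multigraphs (loops and multiple edges allowed). Each edge e has two
  half-edges (e, True) and (e, False) whose ends are endp e True and endp e False.\<close>

record mgraph =
  verts :: "nat set"
  edges :: "nat set"
  endp :: "nat \<Rightarrow> bool \<Rightarrow> nat"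

definition wf_graph :: "mgraph \<Rightarrow> bool" where
  "wf_graph G \<longleftrightarrow> finite (verts G) \<and> verts G \<noteq> {} \<and> finite (edges G) \<and>
     (\<forall>e\<in>edges G. \<forall>b. endp G e b \<in> verts G)"

definition graph_iso :: "mgraph \<Rightarrow> mgraph \<Rightarrow> bool" where
  "graph_iso G H \<longleftrightarrow> (\<exists>f g. bij_betw f (verts G) (verts H) \<and> bij_betw g (edges G) (edges H) \<and>
     (\<forall>e\<in>edges G. {# f (endp G e True), f (endp G e False) #} =
                    {# endp H (g e) True, endp H (g e) False #}))"

definition assembly_design :: "mgraph \<Rightarrow> (nat \<Rightarrow> bool \<Rightarrow> cend) \<Rightarrow> bool" where
  "assembly_design G lam \<longleftrightarrow> (\<forall>e\<in>edges G. lam e True = hat (lam e False))"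

definition tile_at :: "mgraph \<Rightarrow> (nat \<Rightarrow> bool \<Rightarrow> cend) \<Rightarrow> nat \<Rightarrow> tile" where
  "tile_at G lam v =
     image_mset (\<lambda>(e, b). lam e b) (mset_set {(e, b). e \<in> edges G \<and> endp G e b = v})"

definition pot_of :: "mgraph \<Rightarrow> (nat \<Rightarrow> bool \<Rightarrow> cend) \<Rightarrow> tile set" where
  "pot_of G lam = tile_at G lam ` verts G"

definition realizes :: "tile set \<Rightarrow> mgraph \<Rightarrow> bool" where
  "realizes P H \<longleftrightarrow> (\<exists>lam. assembly_design H lam \<and> pot_of H lam \<subseteq> P)"

definition realizes_S3 :: "tile set \<Rightarrow> mgraph \<Rightarrow> bool" where
  "realizes_S3 P G \<longleftrightarrow> realizes P G \<and>
     (\<forall>H. wf_graph H \<and> realizes P H \<longrightarrow> card (verts H) \<ge> card (verts G)) \<and>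
     (\<forall>H. wf_graph H \<and> realizes P H \<and> card (verts H) = card (verts G) \<longrightarrow> graph_iso G H)"

definition T3 :: "mgraph \<Rightarrow> nat" where
  "T3 G = (LEAST n. \<exists>P. is_pot P \<and> card P = n \<and> realizes_S3 P G)"

text \<open>The cube graph Q3 on vertices 0..7 (bit strings), edges join strings differing in one bit.\<close>

definition cube_edge_list :: "(nat \<times> nat) list" where
  "cube_edge_list = [(0,1),(2,3),(4,5),(6,7),(0,2),(1,3),(4,6),(5,7),(0,4),(1,5),(2,6),(3,7)]"

definition Q3 :: mgraph where
  "Q3 = \<lparr> verts = {0..<8}, edges = {0..<12},
          endp = (\<lambda>e b. if b then fst (cube_edge_list ! e) else snd (cube_edge_list ! e)) \<rparr>"

end

theory Submission
  imports Defs
begin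

lemma hat_hat[simp]: "hat (hat x) = x" by (simp add: hat_def)
lemma hat_neq[simp]: "hat x \<noteq> x" "x \<noteq> hat x" by (auto simp: hat_def prod_eq_iff)

lemma Q3_simps[simp]: "verts Q3 = {0..<8}" "edges Q3 = {0..<12}"
  by (simp_all add: Q3_def)

lemma Q3_endp[simp]:
  "endp Q3 0 b = (if b then 0 else 1)"
  "endp Q3 1 b = (if b then 2 else 3)"
  "endp Q3 (Suc 0) b = (if b then 2 else 3)"
  "endp Q3 2 b = (if b then 4 else 5)"
  "endp Q3 3 b = (if b then 6 else 7)"
  "endp Q3 4 b = (if b then 0 else 2)"
  "endp Q3 5 b = (if b then 1 else 3)"
  "endp Q3 6 b = (if b then 4 else 6)"
  "endp Q3 7 b = (if b then 5 else 7)"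
  "endp Q3 8 b = (if b then 0 else 4)"
  "endp Q3 9 b = (if b then 1 else 5)"
  "endp Q3 10 b = (if b then 2 else 6)"
  "endp Q3 11 b = (if b then 3 else 7)"
  by (simp_all add: Q3_def cube_edge_list_def)

lemma less12: "(e::nat) < 12 \<longleftrightarrow> e = 0 \<or> e = 1 \<or> e = 2 \<or> e = 3 \<or> e = 4 \<or> e = 5 \<or> e = 6 \<or> e = 7 \<or> e = 8 \<or> e = 9 \<or> e = 10 \<or> e = 11"
  by presburger
lemma less8: "(e::nat) < 8 \<longleftrightarrow> e = 0 \<or> e = 1 \<or> e = 2 \<or> e = 3 \<or> e = 4 \<or> e = 5 \<or> e = 6 \<or> e = 7"
  by presburger

definition HS :: "mgraph \<Rightarrow> nat \<Rightarrow> (nat \<times> bool) set" where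
  "HS G v = {(e, b). e \<in> edges G \<and> endp G e b = v}"

lemma tile_at_HS: "tile_at G lam v = image_mset (\<lambda>(e, b). lam e b) (mset_set (HS G v))"
  by (simp add: tile_at_def HS_def)

lemma HS_Q3:
  "HS Q3 0 = {(0,True),(4,True),(8,True)}"
  "HS Q3 1 = {(0,False),(5,True),(9,True)}"
  "HS Q3 2 = {(1,True),(4,False),(10,True)}"
  "HS Q3 3 = {(1,False),(5,False),(11,True)}"
  "HS Q3 4 = {(2,True),(6,True),(8,False)}"
  "HS Q3 5 = {(2,False),(7,True),(9,False)}"
  "HS Q3 6 = {(3,True),(6,False),(10,False)}"
  "HS Q3 7 = {(3,False),(7,False),(11,False)}"
  by (auto simp: HS_def less12 split: if_splits)


definition tr :: "nat \<times> bool \<Rightarrow> nat \<times> bool \<Rightarrow> nat \<times> bool \<Rightarrow> nat \<times> bool" where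
  "tr h1 h2 h = (if h = h1 then h2 else if h = h2 then h1 else h)"

lemma tr_tr[simp]: "tr h1 h2 (tr h1 h2 h) = h" by (simp add: tr_def)
lemma inj_tr: "inj (tr h1 h2)" by (metis injI tr_tr)

definition swapg :: "mgraph \<Rightarrow> nat \<times> bool \<Rightarrow> nat \<times> bool \<Rightarrow> mgraph" where
  "swapg G h1 h2 = G\<lparr>endp := (\<lambda>e b. endp G (fst (tr h1 h2 (e, b))) (snd (tr h1 h2 (e, b))))\<rparr>"

lemma swapg_simps[simp]: "verts (swapg G h1 h2) = verts G" "edges (swapg G h1 h2) = edges G"
  "endp (swapg G h1 h2) e b = endp G (fst (tr h1 h2 (e, b))) (snd (tr h1 h2 (e, b)))"
  by (simp_all add: swapg_def)

lemma fst_tr_in: "fst h1 \<in> A \<Longrightarrow> fst h2 \<in> A \<Longrightarrow> (fst (tr h1 h2 h) \<in> A) = (fst h \<in> A)"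
  by (auto simp: tr_def)

lemma HS_swapg:
  assumes "fst h1 \<in> edges G" "fst h2 \<in> edges G"
  shows "HS (swapg G h1 h2) v = tr h1 h2 ` HS G v"
proof -
  have "x \<in> HS (swapg G h1 h2) v \<longleftrightarrow> tr h1 h2 x \<in> HS G v" for x
    using fst_tr_in[OF assms, of x] by (cases x; cases "tr h1 h2 x") (auto simp: HS_def)
  then show ?thesis
    by (metis (no_types, lifting) image_eqI imageE subsetI subset_antisym tr_tr)
qed

lemma tile_swapg:
  assumes "fst h1 \<in> edges G" "fst h2 \<in> edges G"
    and "lam (fst h1) (snd h1) = lam (fst h2) (snd h2)"
  shows "tile_at (swapg G h1 h2) lam v = tile_at G lam v"
proof -
  have inj: "inj_on (tr h1 h2) (HS G v)" using inj_tr by (metis inj_on_subset subset_UNIV)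
  have eq: "(\<lambda>(e, b). lam e b) (tr h1 h2 x) = (\<lambda>(e, b). lam e b) x" for x
    using assms(3) by (cases x; cases h1; cases h2) (auto simp: tr_def)
  have "tile_at (swapg G h1 h2) lam v = image_mset (\<lambda>(e, b). lam e b) (image_mset (tr h1 h2) (mset_set (HS G v)))"
    unfolding tile_at_HS HS_swapg[OF assms(1,2)] image_mset_mset_set[OF inj] ..
  also have "\<dots> = image_mset (\<lambda>(e, b). lam e b) (mset_set (HS G v))"
    unfolding image_mset.compositionality o_def eq ..
  finally show ?thesis by (simp add: tile_at_HS)
qed

lemma swapg_realizes:
  assumes "fst h1 \<in> edges G" "fst h2 \<in> edges G"
    and "lam (fst h1) (snd h1) = lam (fst h2) (snd h2)"
    and "assembly_design G lam" "pot_of G lam \<subseteq> P"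
  shows "realizes P (swapg G h1 h2)"
  unfolding realizes_def
proof (intro exI conjI)
  show "assembly_design (swapg G h1 h2) lam" using assms(4) by (simp add: assembly_design_def)
  show "pot_of (swapg G h1 h2) lam \<subseteq> P" using assms(5) tile_swapg[OF assms(1-3)]
    by (simp add: pot_of_def)
qed

lemma swapg_wf:
  assumes "wf_graph G" "fst h1 \<in> edges G" "fst h2 \<in> edges G"
  shows "wf_graph (swapg G h1 h2)"
  using assms fst_tr_in[OF assms(2,3)] unfolding wf_graph_def
  by (metis swapg_simps fst_conv)

lemma wf_Q3: "wf_graph Q3"
  by (auto simp: wf_graph_def less12)

definition conn :: "mgraph \<Rightarrow> nat \<Rightarrow> nat \<Rightarrow> nat \<Rightarrow> bool" where
  "conn H i u v \<longleftrightarrow> i \<in> edges H \<and> {#endp H i True, endp H i False#} = {#u, v#}"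

definition col :: "nat \<Rightarrow> bool" where
  "col v = (v = 1 \<or> v = 2 \<or> v = 4 \<or> v = 7)"

lemma mset2_eq: "{#a, b#} = {#c, d#} \<longleftrightarrow> (a = c \<and> b = d) \<or> (a = d \<and> b = c)"
  by (auto simp: add_eq_conv_ex)

lemma Q3_noloop: "e \<in> edges Q3 \<Longrightarrow> endp Q3 e True \<noteq> endp Q3 e False"
  by (auto simp: less12)

lemma Q3_col: "e \<in> edges Q3 \<Longrightarrow> col (endp Q3 e True) \<noteq> col (endp Q3 e False)"
  by (auto simp: less12 col_def)

lemma Q3_nopar: "e \<in> edges Q3 \<Longrightarrow> e' \<in> edges Q3 \<Longrightarrow> e \<noteq> e' \<Longrightarrow>
   {#endp Q3 e True, endp Q3 e False#} \<noteq> {#endp Q3 e' True, endp Q3 e' False#}"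
  by (auto simp: less12 mset2_eq)


lemma mset3_eq: "{#a, b, c#} = {#d, e, f#} \<longleftrightarrow>
   (a = d \<and> b = e \<and> c = f) \<or> (a = d \<and> b = f \<and> c = e) \<or> (a = e \<and> b = d \<and> c = f) \<or>
   (a = e \<and> b = f \<and> c = d) \<or> (a = f \<and> b = d \<and> c = e) \<or> (a = f \<and> b = e \<and> c = d)"
  by (auto simp: add_eq_conv_ex)

lemma Q3_endp_in: "e < 12 \<Longrightarrow> endp Q3 e b < 8"
  by (auto simp: less12)

lemma iso_Q3:
  assumes "graph_iso Q3 H"
  shows "\<forall>e\<in>edges H. endp H e True \<noteq> endp H e False"
    and "\<forall>e\<in>edges H. \<forall>e'\<in>edges H. e \<noteq> e' \<longrightarrow> {#endp H e True, endp H e False#} \<noteq> {#endp H e' True, endp H e' False#}"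
    and "\<exists>c::nat \<Rightarrow> bool. \<forall>e\<in>edges H. c (endp H e True) \<noteq> c (endp H e False)"
proof -
  obtain f g where bf: "bij_betw f {0..<8} (verts H)" and bg: "bij_betw g {0..<12} (edges H)"
    and M: "\<And>e. e < 12 \<Longrightarrow> {# f (endp Q3 e True), f (endp Q3 e False) #} = {# endp H (g e) True, endp H (g e) False #}"
    using assms unfolding graph_iso_def by auto
  have injf: "\<And>a b. a < 8 \<Longrightarrow> b < 8 \<Longrightarrow> f a = f b \<Longrightarrow> a = b"
    using bf unfolding bij_betw_def inj_on_def by auto
  have injg: "\<And>a b. a < 12 \<Longrightarrow> b < 12 \<Longrightarrow> g a = g b \<Longrightarrow> a = b"
    using bg unfolding bij_betw_def inj_on_def by auto
  have surjg: "\<exists>e<12. e' = g e" if "e' \<in> edges H" for e'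
  proof -
    have "e' \<in> g ` {0..<12}" using bg that unfolding bij_betw_def by simp
    then obtain e where "e \<in> {0..<12}" "e' = g e" by blast
    then show ?thesis by auto
  qed
  show "\<forall>e\<in>edges H. endp H e True \<noteq> endp H e False"
  proof
    fix e' assume "e' \<in> edges H"
    then obtain e where e: "e < 12" "e' = g e" using surjg by blast
    show "endp H e' True \<noteq> endp H e' False"
    proof
      assume eq: "endp H e' True = endp H e' False"
      have "{#f (endp Q3 e True), f (endp Q3 e False)#} = {#endp H e' True, endp H e' False#}"
        using M[OF e(1)] e(2) by simp
      then have "f (endp Q3 e True) = f (endp Q3 e False)" unfolding mset2_eq eq by metis
      then have "endp Q3 e True = endp Q3 e False" using injf Q3_endp_in e(1) by blast
      then show False using Q3_noloop e(1) by simp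
    qed
  qed
  show "\<forall>e\<in>edges H. \<forall>e'\<in>edges H. e \<noteq> e' \<longrightarrow> {#endp H e True, endp H e False#} \<noteq> {#endp H e' True, endp H e' False#}"
  proof (intro ballI impI notI)
    fix x y assume x: "x \<in> edges H" and y: "y \<in> edges H" and xy: "x \<noteq> y"
      and eq: "{#endp H x True, endp H x False#} = {#endp H y True, endp H y False#}"
    obtain a where a: "a < 12" "x = g a" using surjg x by blast
    obtain b where b: "b < 12" "y = g b" using surjg y by blast
    have ab: "a \<noteq> b" using xy a b by auto
    have "{# f (endp Q3 a True), f (endp Q3 a False) #} = {# f (endp Q3 b True), f (endp Q3 b False) #}"
      using M[OF a(1)] M[OF b(1)] eq a b by simp
    then have "{# endp Q3 a True, endp Q3 a False #} = {# endp Q3 b True, endp Q3 b False #}"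
      unfolding mset2_eq
    proof (elim disjE conjE)
      assume "f (endp Q3 a True) = f (endp Q3 b True)" "f (endp Q3 a False) = f (endp Q3 b False)"
      then show "endp Q3 a True = endp Q3 b True \<and> endp Q3 a False = endp Q3 b False \<or>
                 endp Q3 a True = endp Q3 b False \<and> endp Q3 a False = endp Q3 b True"
        using injf Q3_endp_in a(1) b(1) by blast
    next
      assume "f (endp Q3 a True) = f (endp Q3 b False)" "f (endp Q3 a False) = f (endp Q3 b True)"
      then show "endp Q3 a True = endp Q3 b True \<and> endp Q3 a False = endp Q3 b False \<or>
                 endp Q3 a True = endp Q3 b False \<and> endp Q3 a False = endp Q3 b True"
        using injf Q3_endp_in a(1) b(1) by blast
    qed
    then show False using Q3_nopar[of a b] a b ab by simp
  qed
  show "\<exists>c::nat \<Rightarrow> bool. \<forall>e\<in>edges H. c (endp H e True) \<noteq> c (endp H e False)"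
  proof (intro exI ballI)
    fix e' assume "e' \<in> edges H"
    then obtain e where e: "e < 12" "e' = g e" using surjg by blast
    let ?c = "\<lambda>w. col (inv_into {0..<8} f w)"
    have cf: "\<And>a. a < 8 \<Longrightarrow> ?c (f a) = col a"
      using bf unfolding bij_betw_def by (simp add: inv_into_f_f)
    have "{#f (endp Q3 e True), f (endp Q3 e False)#} = {#endp H e' True, endp H e' False#}"
      using M[OF e(1)] e(2) by simp
    then have D: "(f (endp Q3 e True) = endp H e' True \<and> f (endp Q3 e False) = endp H e' False) \<or>
      (f (endp Q3 e True) = endp H e' False \<and> f (endp Q3 e False) = endp H e' True)"
      unfolding mset2_eq .
    have c1: "?c (f (endp Q3 e True)) = col (endp Q3 e True)" using cf Q3_endp_in[OF e(1)] by blast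
    have c2: "?c (f (endp Q3 e False)) = col (endp Q3 e False)" using cf Q3_endp_in[OF e(1)] by blast
    have "col (endp Q3 e True) \<noteq> col (endp Q3 e False)" using Q3_col[of e] e(1) by simp
    then show "?c (endp H e' True) \<noteq> ?c (endp H e' False)"
      using D c1 c2 by metis
  qed
qed

lemma conn_col: "conn H i u v \<Longrightarrow> \<forall>e\<in>edges H. c (endp H e True) \<noteq> c (endp H e False) \<Longrightarrow> c u \<noteq> c v"
  unfolding conn_def mset2_eq by auto

lemma bad_loop: "graph_iso Q3 H \<Longrightarrow> i \<in> edges H \<Longrightarrow> endp H i True = endp H i False \<Longrightarrow> False"
  using iso_Q3(1) by blast

lemma bad_par: "graph_iso Q3 H \<Longrightarrow> conn H i u v \<Longrightarrow> conn H j u v \<Longrightarrow> i \<noteq> j \<Longrightarrow> False"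
  using iso_Q3(2) unfolding conn_def by metis

lemma bad_tri: "graph_iso Q3 H \<Longrightarrow> conn H i a b \<Longrightarrow> conn H j b c \<Longrightarrow> conn H k c a \<Longrightarrow> False"
proof -
  assume "graph_iso Q3 H" "conn H i a b" "conn H j b c" "conn H k c a"
  moreover obtain co :: "nat \<Rightarrow> bool" where "\<forall>e\<in>edges H. co (endp H e True) \<noteq> co (endp H e False)"
    using iso_Q3(3)[OF \<open>graph_iso Q3 H\<close>] by blast
  ultimately have "co a \<noteq> co b" "co b \<noteq> co c" "co c \<noteq> co a" using conn_col by blast+
  then show False by (cases "co a"; cases "co b"; cases "co c") auto
qed

lemma bad_pent: "graph_iso Q3 H \<Longrightarrow> conn H i a b \<Longrightarrow> conn H j b c \<Longrightarrow> conn H k c d \<Longrightarrow>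
   conn H l d x \<Longrightarrow> conn H m x a \<Longrightarrow> False"
proof -
  assume "graph_iso Q3 H" "conn H i a b" "conn H j b c" "conn H k c d" "conn H l d x" "conn H m x a"
  moreover obtain co :: "nat \<Rightarrow> bool" where "\<forall>e\<in>edges H. co (endp H e True) \<noteq> co (endp H e False)"
    using iso_Q3(3)[OF \<open>graph_iso Q3 H\<close>] by blast
  ultimately have "co a \<noteq> co b" "co b \<noteq> co c" "co c \<noteq> co d" "co d \<noteq> co x" "co x \<noteq> co a"
    using conn_col by blast+
  then show False by (cases "co a"; cases "co b"; cases "co c"; cases "co d") auto
qed

lemma swap_iso:
  assumes "realizes_S3 P Q3" "assembly_design Q3 lam" "pot_of Q3 lam \<subseteq> P"
    and "e1 < 12" "e2 < 12" "lam e1 b1 = lam e2 b2"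
  shows "graph_iso Q3 (swapg Q3 (e1, b1) (e2, b2))"
proof -
  have "wf_graph (swapg Q3 (e1, b1) (e2, b2))" using swapg_wf[OF wf_Q3] assms(4,5) by simp
  moreover have "realizes P (swapg Q3 (e1, b1) (e2, b2))"
    using swapg_realizes[of "(e1, b1)" Q3 "(e2, b2)" lam P] assms by simp
  ultimately show ?thesis using assms(1) unfolding realizes_S3_def by simp
qed

lemma card4:
  assumes "\<not>(a=b\<and>a=c)" "\<not>(a=b\<and>a=d)" "\<not>(a=c\<and>a=d)"
    "\<not>(b=a\<and>b=c)" "\<not>(b=a\<and>b=d)" "\<not>(b=c\<and>b=d)"
    "\<not>(c=a\<and>c=b)" "\<not>(c=a\<and>c=d)" "\<not>(c=b\<and>c=d)"
    "\<not>(d=a\<and>d=b)" "\<not>(d=a\<and>d=c)" "\<not>(d=b\<and>d=c)"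
  shows "3 \<le> card {a,b,c,d} \<or> (a=b \<and> c=d) \<or> (a=c \<and> b=d) \<or> (a=d \<and> b=c)"
    and "card {a,b,c,d} = 4 \<or> a=b \<or> a=c \<or> a=d \<or> b=c \<or> b=d \<or> c=d"
    and "2 \<le> card {a,b,c,d}"
  using assms by (auto simp: card_insert_if)

locale lb =
  fixes P lam
  assumes S3: "realizes_S3 P Q3" and des: "assembly_design Q3 lam" and pot: "pot_of Q3 lam \<subseteq> P"
begin

lemma ne0: "lam 0 False \<noteq> lam 1 False"
proof
  assume "lam 0 False = lam 1 False"
  then have iso: "graph_iso Q3 (swapg Q3 (0, False) (1, False))" by (intro swap_iso[OF S3 des pot]) simp_all
  show False by (rule bad_pent[OF iso, of 0 0 3 5 1 9 5 2 4 8]) (simp_all add: tr_def conn_def mset2_eq)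
qed

lemma ne1: "lam 0 False \<noteq> lam 1 True"
proof
  assume "lam 0 False = lam 1 True"
  then have iso: "graph_iso Q3 (swapg Q3 (0, False) (1, True))" by (intro swap_iso[OF S3 des pot]) simp_all
  show False by (rule bad_par[OF iso, of 0 0 2 4]) (simp_all add: tr_def conn_def mset2_eq)
qed

lemma ne2: "lam 0 False \<noteq> lam 2 False"
proof
  assume "lam 0 False = lam 2 False"
  then have iso: "graph_iso Q3 (swapg Q3 (0, False) (2, False))" by (intro swap_iso[OF S3 des pot]) simp_all
  show False by (rule bad_pent[OF iso, of 0 0 5 7 7 3 6 6 4 8]) (simp_all add: tr_def conn_def mset2_eq)
qed

lemma ne3: "lam 0 False \<noteq> lam 2 True"
proof
  assume "lam 0 False = lam 2 True"
  then have iso: "graph_iso Q3 (swapg Q3 (0, False) (2, True))" by (intro swap_iso[OF S3 des pot]) simp_all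
  show False by (rule bad_par[OF iso, of 0 0 4 8]) (simp_all add: tr_def conn_def mset2_eq)
qed

lemma ne4: "lam 0 False \<noteq> lam 3 True"
proof
  assume "lam 0 False = lam 3 True"
  then have iso: "graph_iso Q3 (swapg Q3 (0, False) (3, True))" by (intro swap_iso[OF S3 des pot]) simp_all
  show False by (rule bad_tri[OF iso, of 0 0 6 6 4 8]) (simp_all add: tr_def conn_def mset2_eq)
qed

lemma ne5: "lam 0 False \<noteq> lam 4 True"
proof
  assume "lam 0 False = lam 4 True"
  then have iso: "graph_iso Q3 (swapg Q3 (0, False) (4, True))" by (intro swap_iso[OF S3 des pot]) simp_all
  show False by (rule bad_loop[OF iso, of 0]) (simp_all add: tr_def)
qed

lemma ne6: "lam 0 False \<noteq> lam 5 False"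
proof
  assume "lam 0 False = lam 5 False"
  then have iso: "graph_iso Q3 (swapg Q3 (0, False) (5, False))" by (intro swap_iso[OF S3 des pot]) simp_all
  show False by (rule bad_loop[OF iso, of 5]) (simp_all add: tr_def)
qed

lemma ne7: "lam 0 False \<noteq> lam 6 False"
proof
  assume "lam 0 False = lam 6 False"
  then have iso: "graph_iso Q3 (swapg Q3 (0, False) (6, False))" by (intro swap_iso[OF S3 des pot]) simp_all
  show False by (rule bad_tri[OF iso, of 0 0 6 10 2 4]) (simp_all add: tr_def conn_def mset2_eq)
qed

lemma ne8: "lam 0 False \<noteq> lam 6 True"
proof
  assume "lam 0 False = lam 6 True"
  then have iso: "graph_iso Q3 (swapg Q3 (0, False) (6, True))" by (intro swap_iso[OF S3 des pot]) simp_all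
  show False by (rule bad_par[OF iso, of 0 0 4 8]) (simp_all add: tr_def conn_def mset2_eq)
qed

lemma ne9: "lam 0 False \<noteq> lam 7 False"
proof
  assume "lam 0 False = lam 7 False"
  then have iso: "graph_iso Q3 (swapg Q3 (0, False) (7, False))" by (intro swap_iso[OF S3 des pot]) simp_all
  show False by (rule bad_par[OF iso, of 7 5 1 9]) (simp_all add: tr_def conn_def mset2_eq)
qed

lemma ne10: "lam 0 False \<noteq> lam 7 True"
proof
  assume "lam 0 False = lam 7 True"
  then have iso: "graph_iso Q3 (swapg Q3 (0, False) (7, True))" by (intro swap_iso[OF S3 des pot]) simp_all
  show False by (rule bad_tri[OF iso, of 0 0 5 2 4 8]) (simp_all add: tr_def conn_def mset2_eq)
qed

lemma ne11: "lam 0 False \<noteq> lam 8 True"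
proof
  assume "lam 0 False = lam 8 True"
  then have iso: "graph_iso Q3 (swapg Q3 (0, False) (8, True))" by (intro swap_iso[OF S3 des pot]) simp_all
  show False by (rule bad_loop[OF iso, of 0]) (simp_all add: tr_def)
qed

lemma ne12: "lam 0 False \<noteq> lam 9 False"
proof
  assume "lam 0 False = lam 9 False"
  then have iso: "graph_iso Q3 (swapg Q3 (0, False) (9, False))" by (intro swap_iso[OF S3 des pot]) simp_all
  show False by (rule bad_loop[OF iso, of 9]) (simp_all add: tr_def)
qed

lemma ne13: "lam 0 False \<noteq> lam 10 False"
proof
  assume "lam 0 False = lam 10 False"
  then have iso: "graph_iso Q3 (swapg Q3 (0, False) (10, False))" by (intro swap_iso[OF S3 des pot]) simp_all
  show False by (rule bad_tri[OF iso, of 0 0 6 6 4 8]) (simp_all add: tr_def conn_def mset2_eq)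
qed

lemma ne14: "lam 0 False \<noteq> lam 10 True"
proof
  assume "lam 0 False = lam 10 True"
  then have iso: "graph_iso Q3 (swapg Q3 (0, False) (10, True))" by (intro swap_iso[OF S3 des pot]) simp_all
  show False by (rule bad_par[OF iso, of 0 0 2 4]) (simp_all add: tr_def conn_def mset2_eq)
qed

lemma ne15: "lam 0 False \<noteq> lam 11 False"
proof
  assume "lam 0 False = lam 11 False"
  then have iso: "graph_iso Q3 (swapg Q3 (0, False) (11, False))" by (intro swap_iso[OF S3 des pot]) simp_all
  show False by (rule bad_par[OF iso, of 5 1 3 11]) (simp_all add: tr_def conn_def mset2_eq)
qed

lemma ne16: "lam 0 False \<noteq> lam 11 True"
proof
  assume "lam 0 False = lam 11 True"
  then have iso: "graph_iso Q3 (swapg Q3 (0, False) (11, True))" by (intro swap_iso[OF S3 des pot]) simp_all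
  show False by (rule bad_tri[OF iso, of 0 0 3 1 2 4]) (simp_all add: tr_def conn_def mset2_eq)
qed

lemma ne17: "lam 0 True \<noteq> lam 1 False"
proof
  assume "lam 0 True = lam 1 False"
  then have iso: "graph_iso Q3 (swapg Q3 (0, True) (1, False))" by (intro swap_iso[OF S3 des pot]) simp_all
  show False by (rule bad_par[OF iso, of 0 3 1 5]) (simp_all add: tr_def conn_def mset2_eq)
qed

lemma ne18: "lam 0 True \<noteq> lam 1 True"
proof
  assume "lam 0 True = lam 1 True"
  then have iso: "graph_iso Q3 (swapg Q3 (0, True) (1, True))" by (intro swap_iso[OF S3 des pot]) simp_all
  show False by (rule bad_pent[OF iso, of 1 0 3 5 1 9 5 2 4 8]) (simp_all add: tr_def conn_def mset2_eq)
qed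

lemma ne19: "lam 0 True \<noteq> lam 2 False"
proof
  assume "lam 0 True = lam 2 False"
  then have iso: "graph_iso Q3 (swapg Q3 (0, True) (2, False))" by (intro swap_iso[OF S3 des pot]) simp_all
  show False by (rule bad_par[OF iso, of 0 5 1 9]) (simp_all add: tr_def conn_def mset2_eq)
qed

lemma ne20: "lam 0 True \<noteq> lam 2 True"
proof
  assume "lam 0 True = lam 2 True"
  then have iso: "graph_iso Q3 (swapg Q3 (0, True) (2, True))" by (intro swap_iso[OF S3 des pot]) simp_all
  show False by (rule bad_pent[OF iso, of 2 0 5 7 7 3 6 6 4 8]) (simp_all add: tr_def conn_def mset2_eq)
qed

lemma ne21: "lam 0 True \<noteq> lam 3 False"
proof
  assume "lam 0 True = lam 3 False"
  then have iso: "graph_iso Q3 (swapg Q3 (0, True) (3, False))" by (intro swap_iso[OF S3 des pot]) simp_all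
  show False by (rule bad_tri[OF iso, of 3 0 6 6 4 8]) (simp_all add: tr_def conn_def mset2_eq)
qed

lemma ne22: "lam 0 True \<noteq> lam 4 False"
proof
  assume "lam 0 True = lam 4 False"
  then have iso: "graph_iso Q3 (swapg Q3 (0, True) (4, False))" by (intro swap_iso[OF S3 des pot]) simp_all
  show False by (rule bad_loop[OF iso, of 4]) (simp_all add: tr_def)
qed

lemma ne23: "lam 0 True \<noteq> lam 5 True"
proof
  assume "lam 0 True = lam 5 True"
  then have iso: "graph_iso Q3 (swapg Q3 (0, True) (5, True))" by (intro swap_iso[OF S3 des pot]) simp_all
  show False by (rule bad_loop[OF iso, of 0]) (simp_all add: tr_def)
qed

lemma ne24: "lam 0 True \<noteq> lam 6 False"
proof
  assume "lam 0 True = lam 6 False"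
  then have iso: "graph_iso Q3 (swapg Q3 (0, True) (6, False))" by (intro swap_iso[OF S3 des pot]) simp_all
  show False by (rule bad_par[OF iso, of 6 4 0 8]) (simp_all add: tr_def conn_def mset2_eq)
qed

lemma ne25: "lam 0 True \<noteq> lam 6 True"
proof
  assume "lam 0 True = lam 6 True"
  then have iso: "graph_iso Q3 (swapg Q3 (0, True) (6, True))" by (intro swap_iso[OF S3 des pot]) simp_all
  show False by (rule bad_tri[OF iso, of 4 0 2 10 6 6]) (simp_all add: tr_def conn_def mset2_eq)
qed

lemma ne26: "lam 0 True \<noteq> lam 7 False"
proof
  assume "lam 0 True = lam 7 False"
  then have iso: "graph_iso Q3 (swapg Q3 (0, True) (7, False))" by (intro swap_iso[OF S3 des pot]) simp_all
  show False by (rule bad_tri[OF iso, of 7 0 5 2 4 8]) (simp_all add: tr_def conn_def mset2_eq)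
qed

lemma ne27: "lam 0 True \<noteq> lam 7 True"
proof
  assume "lam 0 True = lam 7 True"
  then have iso: "graph_iso Q3 (swapg Q3 (0, True) (7, True))" by (intro swap_iso[OF S3 des pot]) simp_all
  show False by (rule bad_par[OF iso, of 0 5 1 9]) (simp_all add: tr_def conn_def mset2_eq)
qed

lemma ne28: "lam 0 True \<noteq> lam 8 False"
proof
  assume "lam 0 True = lam 8 False"
  then have iso: "graph_iso Q3 (swapg Q3 (0, True) (8, False))" by (intro swap_iso[OF S3 des pot]) simp_all
  show False by (rule bad_loop[OF iso, of 8]) (simp_all add: tr_def)
qed

lemma ne29: "lam 0 True \<noteq> lam 9 True"
proof
  assume "lam 0 True = lam 9 True"
  then have iso: "graph_iso Q3 (swapg Q3 (0, True) (9, True))" by (intro swap_iso[OF S3 des pot]) simp_all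
  show False by (rule bad_loop[OF iso, of 0]) (simp_all add: tr_def)
qed

lemma ne30: "lam 0 True \<noteq> lam 10 False"
proof
  assume "lam 0 True = lam 10 False"
  then have iso: "graph_iso Q3 (swapg Q3 (0, True) (10, False))" by (intro swap_iso[OF S3 des pot]) simp_all
  show False by (rule bad_par[OF iso, of 4 0 2 10]) (simp_all add: tr_def conn_def mset2_eq)
qed

lemma ne31: "lam 0 True \<noteq> lam 10 True"
proof
  assume "lam 0 True = lam 10 True"
  then have iso: "graph_iso Q3 (swapg Q3 (0, True) (10, True))" by (intro swap_iso[OF S3 des pot]) simp_all
  show False by (rule bad_tri[OF iso, of 8 0 4 6 6 10]) (simp_all add: tr_def conn_def mset2_eq)
qed

lemma ne32: "lam 0 True \<noteq> lam 11 False"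
proof
  assume "lam 0 True = lam 11 False"
  then have iso: "graph_iso Q3 (swapg Q3 (0, True) (11, False))" by (intro swap_iso[OF S3 des pot]) simp_all
  show False by (rule bad_tri[OF iso, of 4 0 2 1 3 11]) (simp_all add: tr_def conn_def mset2_eq)
qed

lemma ne33: "lam 0 True \<noteq> lam 11 True"
proof
  assume "lam 0 True = lam 11 True"
  then have iso: "graph_iso Q3 (swapg Q3 (0, True) (11, True))" by (intro swap_iso[OF S3 des pot]) simp_all
  show False by (rule bad_par[OF iso, of 0 3 1 5]) (simp_all add: tr_def conn_def mset2_eq)
qed

lemma ne34: "lam 1 False \<noteq> lam 2 True"
proof
  assume "lam 1 False = lam 2 True"
  then have iso: "graph_iso Q3 (swapg Q3 (1, False) (2, True))" by (intro swap_iso[OF S3 des pot]) simp_all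
  show False by (rule bad_tri[OF iso, of 4 0 2 1 4 8]) (simp_all add: tr_def conn_def mset2_eq)
qed

lemma ne35: "lam 1 False \<noteq> lam 3 False"
proof
  assume "lam 1 False = lam 3 False"
  then have iso: "graph_iso Q3 (swapg Q3 (1, False) (3, False))" by (intro swap_iso[OF S3 des pot]) simp_all
  show False by (rule bad_pent[OF iso, of 0 0 1 5 3 3 6 6 4 8]) (simp_all add: tr_def conn_def mset2_eq)
qed

lemma ne36: "lam 1 False \<noteq> lam 3 True"
proof
  assume "lam 1 False = lam 3 True"
  then have iso: "graph_iso Q3 (swapg Q3 (1, False) (3, True))" by (intro swap_iso[OF S3 des pot]) simp_all
  show False by (rule bad_par[OF iso, of 1 2 6 10]) (simp_all add: tr_def conn_def mset2_eq)
qed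

lemma ne37: "lam 1 False \<noteq> lam 4 False"
proof
  assume "lam 1 False = lam 4 False"
  then have iso: "graph_iso Q3 (swapg Q3 (1, False) (4, False))" by (intro swap_iso[OF S3 des pot]) simp_all
  show False by (rule bad_loop[OF iso, of 1]) (simp_all add: tr_def)
qed

lemma ne38: "lam 1 False \<noteq> lam 5 True"
proof
  assume "lam 1 False = lam 5 True"
  then have iso: "graph_iso Q3 (swapg Q3 (1, False) (5, True))" by (intro swap_iso[OF S3 des pot]) simp_all
  show False by (rule bad_loop[OF iso, of 5]) (simp_all add: tr_def)
qed

lemma ne39: "lam 1 False \<noteq> lam 6 False"
proof
  assume "lam 1 False = lam 6 False"
  then have iso: "graph_iso Q3 (swapg Q3 (1, False) (6, False))" by (intro swap_iso[OF S3 des pot]) simp_all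
  show False by (rule bad_par[OF iso, of 1 2 6 10]) (simp_all add: tr_def conn_def mset2_eq)
qed

lemma ne40: "lam 1 False \<noteq> lam 6 True"
proof
  assume "lam 1 False = lam 6 True"
  then have iso: "graph_iso Q3 (swapg Q3 (1, False) (6, True))" by (intro swap_iso[OF S3 des pot]) simp_all
  show False by (rule bad_tri[OF iso, of 4 0 2 1 4 8]) (simp_all add: tr_def conn_def mset2_eq)
qed

lemma ne41: "lam 1 False \<noteq> lam 7 False"
proof
  assume "lam 1 False = lam 7 False"
  then have iso: "graph_iso Q3 (swapg Q3 (1, False) (7, False))" by (intro swap_iso[OF S3 des pot]) simp_all
  show False by (rule bad_tri[OF iso, of 5 1 3 7 5 9]) (simp_all add: tr_def conn_def mset2_eq)
qed

lemma ne42: "lam 1 False \<noteq> lam 7 True"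
proof
  assume "lam 1 False = lam 7 True"
  then have iso: "graph_iso Q3 (swapg Q3 (1, False) (7, True))" by (intro swap_iso[OF S3 des pot]) simp_all
  show False by (rule bad_par[OF iso, of 7 3 7 11]) (simp_all add: tr_def conn_def mset2_eq)
qed

lemma ne43: "lam 1 False \<noteq> lam 8 False"
proof
  assume "lam 1 False = lam 8 False"
  then have iso: "graph_iso Q3 (swapg Q3 (1, False) (8, False))" by (intro swap_iso[OF S3 des pot]) simp_all
  show False by (rule bad_tri[OF iso, of 0 0 1 5 3 8]) (simp_all add: tr_def conn_def mset2_eq)
qed

lemma ne44: "lam 1 False \<noteq> lam 8 True"
proof
  assume "lam 1 False = lam 8 True"
  then have iso: "graph_iso Q3 (swapg Q3 (1, False) (8, True))" by (intro swap_iso[OF S3 des pot]) simp_all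
  show False by (rule bad_par[OF iso, of 1 2 0 4]) (simp_all add: tr_def conn_def mset2_eq)
qed

lemma ne45: "lam 1 False \<noteq> lam 9 False"
proof
  assume "lam 1 False = lam 9 False"
  then have iso: "graph_iso Q3 (swapg Q3 (1, False) (9, False))" by (intro swap_iso[OF S3 des pot]) simp_all
  show False by (rule bad_par[OF iso, of 5 1 3 9]) (simp_all add: tr_def conn_def mset2_eq)
qed

lemma ne46: "lam 1 False \<noteq> lam 9 True"
proof
  assume "lam 1 False = lam 9 True"
  then have iso: "graph_iso Q3 (swapg Q3 (1, False) (9, True))" by (intro swap_iso[OF S3 des pot]) simp_all
  show False by (rule bad_tri[OF iso, of 0 0 1 1 2 4]) (simp_all add: tr_def conn_def mset2_eq)
qed

lemma ne47: "lam 1 False \<noteq> lam 10 True"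
proof
  assume "lam 1 False = lam 10 True"
  then have iso: "graph_iso Q3 (swapg Q3 (1, False) (10, True))" by (intro swap_iso[OF S3 des pot]) simp_all
  show False by (rule bad_loop[OF iso, of 1]) (simp_all add: tr_def)
qed

lemma ne48: "lam 1 False \<noteq> lam 11 False"
proof
  assume "lam 1 False = lam 11 False"
  then have iso: "graph_iso Q3 (swapg Q3 (1, False) (11, False))" by (intro swap_iso[OF S3 des pot]) simp_all
  show False by (rule bad_loop[OF iso, of 11]) (simp_all add: tr_def)
qed

lemma ne49: "lam 1 True \<noteq> lam 2 False"
proof
  assume "lam 1 True = lam 2 False"
  then have iso: "graph_iso Q3 (swapg Q3 (1, True) (2, False))" by (intro swap_iso[OF S3 des pot]) simp_all
  show False by (rule bad_tri[OF iso, of 4 0 2 2 4 8]) (simp_all add: tr_def conn_def mset2_eq)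
qed

lemma ne50: "lam 1 True \<noteq> lam 3 False"
proof
  assume "lam 1 True = lam 3 False"
  then have iso: "graph_iso Q3 (swapg Q3 (1, True) (3, False))" by (intro swap_iso[OF S3 des pot]) simp_all
  show False by (rule bad_par[OF iso, of 1 7 3 11]) (simp_all add: tr_def conn_def mset2_eq)
qed

lemma ne51: "lam 1 True \<noteq> lam 3 True"
proof
  assume "lam 1 True = lam 3 True"
  then have iso: "graph_iso Q3 (swapg Q3 (1, True) (3, True))" by (intro swap_iso[OF S3 des pot]) simp_all
  show False by (rule bad_pent[OF iso, of 0 0 1 5 3 1 6 6 4 8]) (simp_all add: tr_def conn_def mset2_eq)
qed

lemma ne52: "lam 1 True \<noteq> lam 4 True"
proof
  assume "lam 1 True = lam 4 True"
  then have iso: "graph_iso Q3 (swapg Q3 (1, True) (4, True))" by (intro swap_iso[OF S3 des pot]) simp_all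
  show False by (rule bad_loop[OF iso, of 4]) (simp_all add: tr_def)
qed

lemma ne53: "lam 1 True \<noteq> lam 5 False"
proof
  assume "lam 1 True = lam 5 False"
  then have iso: "graph_iso Q3 (swapg Q3 (1, True) (5, False))" by (intro swap_iso[OF S3 des pot]) simp_all
  show False by (rule bad_loop[OF iso, of 1]) (simp_all add: tr_def)
qed

lemma ne54: "lam 1 True \<noteq> lam 6 False"
proof
  assume "lam 1 True = lam 6 False"
  then have iso: "graph_iso Q3 (swapg Q3 (1, True) (6, False))" by (intro swap_iso[OF S3 des pot]) simp_all
  show False by (rule bad_tri[OF iso, of 4 0 2 6 4 8]) (simp_all add: tr_def conn_def mset2_eq)
qed

lemma ne55: "lam 1 True \<noteq> lam 6 True"
proof
  assume "lam 1 True = lam 6 True"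
  then have iso: "graph_iso Q3 (swapg Q3 (1, True) (6, True))" by (intro swap_iso[OF S3 des pot]) simp_all
  show False by (rule bad_par[OF iso, of 6 2 6 10]) (simp_all add: tr_def conn_def mset2_eq)
qed

lemma ne56: "lam 1 True \<noteq> lam 7 False"
proof
  assume "lam 1 True = lam 7 False"
  then have iso: "graph_iso Q3 (swapg Q3 (1, True) (7, False))" by (intro swap_iso[OF S3 des pot]) simp_all
  show False by (rule bad_par[OF iso, of 1 7 3 11]) (simp_all add: tr_def conn_def mset2_eq)
qed

lemma ne57: "lam 1 True \<noteq> lam 7 True"
proof
  assume "lam 1 True = lam 7 True"
  then have iso: "graph_iso Q3 (swapg Q3 (1, True) (7, True))" by (intro swap_iso[OF S3 des pot]) simp_all
  show False by (rule bad_tri[OF iso, of 5 1 3 1 5 9]) (simp_all add: tr_def conn_def mset2_eq)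
qed

lemma ne58: "lam 1 True \<noteq> lam 8 False"
proof
  assume "lam 1 True = lam 8 False"
  then have iso: "graph_iso Q3 (swapg Q3 (1, True) (8, False))" by (intro swap_iso[OF S3 des pot]) simp_all
  show False by (rule bad_par[OF iso, of 4 0 2 8]) (simp_all add: tr_def conn_def mset2_eq)
qed

lemma ne59: "lam 1 True \<noteq> lam 8 True"
proof
  assume "lam 1 True = lam 8 True"
  then have iso: "graph_iso Q3 (swapg Q3 (1, True) (8, True))" by (intro swap_iso[OF S3 des pot]) simp_all
  show False by (rule bad_tri[OF iso, of 0 0 1 5 3 1]) (simp_all add: tr_def conn_def mset2_eq)
qed

lemma ne60: "lam 1 True \<noteq> lam 9 False"
proof
  assume "lam 1 True = lam 9 False"
  then have iso: "graph_iso Q3 (swapg Q3 (1, True) (9, False))" by (intro swap_iso[OF S3 des pot]) simp_all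
  show False by (rule bad_tri[OF iso, of 0 0 1 9 2 4]) (simp_all add: tr_def conn_def mset2_eq)
qed

lemma ne61: "lam 1 True \<noteq> lam 9 True"
proof
  assume "lam 1 True = lam 9 True"
  then have iso: "graph_iso Q3 (swapg Q3 (1, True) (9, True))" by (intro swap_iso[OF S3 des pot]) simp_all
  show False by (rule bad_par[OF iso, of 1 1 3 5]) (simp_all add: tr_def conn_def mset2_eq)
qed

lemma ne62: "lam 1 True \<noteq> lam 10 False"
proof
  assume "lam 1 True = lam 10 False"
  then have iso: "graph_iso Q3 (swapg Q3 (1, True) (10, False))" by (intro swap_iso[OF S3 des pot]) simp_all
  show False by (rule bad_loop[OF iso, of 10]) (simp_all add: tr_def)
qed

lemma ne63: "lam 1 True \<noteq> lam 11 True"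
proof
  assume "lam 1 True = lam 11 True"
  then have iso: "graph_iso Q3 (swapg Q3 (1, True) (11, True))" by (intro swap_iso[OF S3 des pot]) simp_all
  show False by (rule bad_loop[OF iso, of 1]) (simp_all add: tr_def)
qed

lemma ne64: "lam 2 False \<noteq> lam 3 False"
proof
  assume "lam 2 False = lam 3 False"
  then have iso: "graph_iso Q3 (swapg Q3 (2, False) (3, False))" by (intro swap_iso[OF S3 des pot]) simp_all
  show False by (rule bad_pent[OF iso, of 0 0 1 5 3 11 7 2 4 8]) (simp_all add: tr_def conn_def mset2_eq)
qed

lemma ne65: "lam 2 False \<noteq> lam 3 True"
proof
  assume "lam 2 False = lam 3 True"
  then have iso: "graph_iso Q3 (swapg Q3 (2, False) (3, True))" by (intro swap_iso[OF S3 des pot]) simp_all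
  show False by (rule bad_par[OF iso, of 2 4 6 6]) (simp_all add: tr_def conn_def mset2_eq)
qed

lemma ne66: "lam 2 False \<noteq> lam 4 False"
proof
  assume "lam 2 False = lam 4 False"
  then have iso: "graph_iso Q3 (swapg Q3 (2, False) (4, False))" by (intro swap_iso[OF S3 des pot]) simp_all
  show False by (rule bad_tri[OF iso, of 0 0 1 9 5 4]) (simp_all add: tr_def conn_def mset2_eq)
qed

lemma ne67: "lam 2 False \<noteq> lam 4 True"
proof
  assume "lam 2 False = lam 4 True"
  then have iso: "graph_iso Q3 (swapg Q3 (2, False) (4, True))" by (intro swap_iso[OF S3 des pot]) simp_all
  show False by (rule bad_par[OF iso, of 2 4 0 8]) (simp_all add: tr_def conn_def mset2_eq)
qed

lemma ne68: "lam 2 False \<noteq> lam 5 False"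
proof
  assume "lam 2 False = lam 5 False"
  then have iso: "graph_iso Q3 (swapg Q3 (2, False) (5, False))" by (intro swap_iso[OF S3 des pot]) simp_all
  show False by (rule bad_par[OF iso, of 5 1 5 9]) (simp_all add: tr_def conn_def mset2_eq)
qed

lemma ne69: "lam 2 False \<noteq> lam 5 True"
proof
  assume "lam 2 False = lam 5 True"
  then have iso: "graph_iso Q3 (swapg Q3 (2, False) (5, True))" by (intro swap_iso[OF S3 des pot]) simp_all
  show False by (rule bad_tri[OF iso, of 0 0 1 2 4 8]) (simp_all add: tr_def conn_def mset2_eq)
qed

lemma ne70: "lam 2 False \<noteq> lam 6 True"
proof
  assume "lam 2 False = lam 6 True"
  then have iso: "graph_iso Q3 (swapg Q3 (2, False) (6, True))" by (intro swap_iso[OF S3 des pot]) simp_all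
  show False by (rule bad_loop[OF iso, of 2]) (simp_all add: tr_def)
qed

lemma ne71: "lam 2 False \<noteq> lam 7 False"
proof
  assume "lam 2 False = lam 7 False"
  then have iso: "graph_iso Q3 (swapg Q3 (2, False) (7, False))" by (intro swap_iso[OF S3 des pot]) simp_all
  show False by (rule bad_loop[OF iso, of 7]) (simp_all add: tr_def)
qed

lemma ne72: "lam 2 False \<noteq> lam 8 False"
proof
  assume "lam 2 False = lam 8 False"
  then have iso: "graph_iso Q3 (swapg Q3 (2, False) (8, False))" by (intro swap_iso[OF S3 des pot]) simp_all
  show False by (rule bad_loop[OF iso, of 2]) (simp_all add: tr_def)
qed

lemma ne73: "lam 2 False \<noteq> lam 9 True"
proof
  assume "lam 2 False = lam 9 True"
  then have iso: "graph_iso Q3 (swapg Q3 (2, False) (9, True))" by (intro swap_iso[OF S3 des pot]) simp_all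
  show False by (rule bad_loop[OF iso, of 9]) (simp_all add: tr_def)
qed

lemma ne74: "lam 2 False \<noteq> lam 10 False"
proof
  assume "lam 2 False = lam 10 False"
  then have iso: "graph_iso Q3 (swapg Q3 (2, False) (10, False))" by (intro swap_iso[OF S3 des pot]) simp_all
  show False by (rule bad_par[OF iso, of 2 4 6 6]) (simp_all add: tr_def conn_def mset2_eq)
qed

lemma ne75: "lam 2 False \<noteq> lam 10 True"
proof
  assume "lam 2 False = lam 10 True"
  then have iso: "graph_iso Q3 (swapg Q3 (2, False) (10, True))" by (intro swap_iso[OF S3 des pot]) simp_all
  show False by (rule bad_tri[OF iso, of 4 0 2 2 4 8]) (simp_all add: tr_def conn_def mset2_eq)
qed

lemma ne76: "lam 2 False \<noteq> lam 11 False"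
proof
  assume "lam 2 False = lam 11 False"
  then have iso: "graph_iso Q3 (swapg Q3 (2, False) (11, False))" by (intro swap_iso[OF S3 des pot]) simp_all
  show False by (rule bad_tri[OF iso, of 5 1 3 11 5 9]) (simp_all add: tr_def conn_def mset2_eq)
qed

lemma ne77: "lam 2 False \<noteq> lam 11 True"
proof
  assume "lam 2 False = lam 11 True"
  then have iso: "graph_iso Q3 (swapg Q3 (2, False) (11, True))" by (intro swap_iso[OF S3 des pot]) simp_all
  show False by (rule bad_par[OF iso, of 7 5 7 11]) (simp_all add: tr_def conn_def mset2_eq)
qed

lemma ne78: "lam 2 True \<noteq> lam 3 False"
proof
  assume "lam 2 True = lam 3 False"
  then have iso: "graph_iso Q3 (swapg Q3 (2, True) (3, False))" by (intro swap_iso[OF S3 des pot]) simp_all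
  show False by (rule bad_par[OF iso, of 2 7 5 7]) (simp_all add: tr_def conn_def mset2_eq)
qed

lemma ne79: "lam 2 True \<noteq> lam 3 True"
proof
  assume "lam 2 True = lam 3 True"
  then have iso: "graph_iso Q3 (swapg Q3 (2, True) (3, True))" by (intro swap_iso[OF S3 des pot]) simp_all
  show False by (rule bad_pent[OF iso, of 0 0 1 5 3 11 7 3 4 8]) (simp_all add: tr_def conn_def mset2_eq)
qed

lemma ne80: "lam 2 True \<noteq> lam 4 False"
proof
  assume "lam 2 True = lam 4 False"
  then have iso: "graph_iso Q3 (swapg Q3 (2, True) (4, False))" by (intro swap_iso[OF S3 des pot]) simp_all
  show False by (rule bad_par[OF iso, of 4 0 4 8]) (simp_all add: tr_def conn_def mset2_eq)
qed

lemma ne81: "lam 2 True \<noteq> lam 4 True"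
proof
  assume "lam 2 True = lam 4 True"
  then have iso: "graph_iso Q3 (swapg Q3 (2, True) (4, True))" by (intro swap_iso[OF S3 des pot]) simp_all
  show False by (rule bad_tri[OF iso, of 0 0 1 9 5 2]) (simp_all add: tr_def conn_def mset2_eq)
qed

lemma ne82: "lam 2 True \<noteq> lam 5 False"
proof
  assume "lam 2 True = lam 5 False"
  then have iso: "graph_iso Q3 (swapg Q3 (2, True) (5, False))" by (intro swap_iso[OF S3 des pot]) simp_all
  show False by (rule bad_tri[OF iso, of 0 0 1 5 4 8]) (simp_all add: tr_def conn_def mset2_eq)
qed

lemma ne83: "lam 2 True \<noteq> lam 5 True"
proof
  assume "lam 2 True = lam 5 True"
  then have iso: "graph_iso Q3 (swapg Q3 (2, True) (5, True))" by (intro swap_iso[OF S3 des pot]) simp_all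
  show False by (rule bad_par[OF iso, of 2 1 5 9]) (simp_all add: tr_def conn_def mset2_eq)
qed

lemma ne84: "lam 2 True \<noteq> lam 6 False"
proof
  assume "lam 2 True = lam 6 False"
  then have iso: "graph_iso Q3 (swapg Q3 (2, True) (6, False))" by (intro swap_iso[OF S3 des pot]) simp_all
  show False by (rule bad_loop[OF iso, of 6]) (simp_all add: tr_def)
qed

lemma ne85: "lam 2 True \<noteq> lam 7 True"
proof
  assume "lam 2 True = lam 7 True"
  then have iso: "graph_iso Q3 (swapg Q3 (2, True) (7, True))" by (intro swap_iso[OF S3 des pot]) simp_all
  show False by (rule bad_loop[OF iso, of 2]) (simp_all add: tr_def)
qed

lemma ne86: "lam 2 True \<noteq> lam 8 True"
proof
  assume "lam 2 True = lam 8 True"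
  then have iso: "graph_iso Q3 (swapg Q3 (2, True) (8, True))" by (intro swap_iso[OF S3 des pot]) simp_all
  show False by (rule bad_loop[OF iso, of 8]) (simp_all add: tr_def)
qed

lemma ne87: "lam 2 True \<noteq> lam 9 False"
proof
  assume "lam 2 True = lam 9 False"
  then have iso: "graph_iso Q3 (swapg Q3 (2, True) (9, False))" by (intro swap_iso[OF S3 des pot]) simp_all
  show False by (rule bad_loop[OF iso, of 2]) (simp_all add: tr_def)
qed

lemma ne88: "lam 2 True \<noteq> lam 10 False"
proof
  assume "lam 2 True = lam 10 False"
  then have iso: "graph_iso Q3 (swapg Q3 (2, True) (10, False))" by (intro swap_iso[OF S3 des pot]) simp_all
  show False by (rule bad_tri[OF iso, of 4 0 2 10 4 8]) (simp_all add: tr_def conn_def mset2_eq)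
qed

lemma ne89: "lam 2 True \<noteq> lam 10 True"
proof
  assume "lam 2 True = lam 10 True"
  then have iso: "graph_iso Q3 (swapg Q3 (2, True) (10, True))" by (intro swap_iso[OF S3 des pot]) simp_all
  show False by (rule bad_par[OF iso, of 6 4 6 10]) (simp_all add: tr_def conn_def mset2_eq)
qed

lemma ne90: "lam 2 True \<noteq> lam 11 False"
proof
  assume "lam 2 True = lam 11 False"
  then have iso: "graph_iso Q3 (swapg Q3 (2, True) (11, False))" by (intro swap_iso[OF S3 des pot]) simp_all
  show False by (rule bad_par[OF iso, of 2 7 5 7]) (simp_all add: tr_def conn_def mset2_eq)
qed

lemma ne91: "lam 2 True \<noteq> lam 11 True"
proof
  assume "lam 2 True = lam 11 True"
  then have iso: "graph_iso Q3 (swapg Q3 (2, True) (11, True))" by (intro swap_iso[OF S3 des pot]) simp_all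
  show False by (rule bad_tri[OF iso, of 5 1 3 2 5 9]) (simp_all add: tr_def conn_def mset2_eq)
qed

lemma ne92: "lam 3 False \<noteq> lam 4 False"
proof
  assume "lam 3 False = lam 4 False"
  then have iso: "graph_iso Q3 (swapg Q3 (3, False) (4, False))" by (intro swap_iso[OF S3 des pot]) simp_all
  show False by (rule bad_par[OF iso, of 3 6 2 10]) (simp_all add: tr_def conn_def mset2_eq)
qed

lemma ne93: "lam 3 False \<noteq> lam 4 True"
proof
  assume "lam 3 False = lam 4 True"
  then have iso: "graph_iso Q3 (swapg Q3 (3, False) (4, True))" by (intro swap_iso[OF S3 des pot]) simp_all
  show False by (rule bad_tri[OF iso, of 3 0 6 6 4 8]) (simp_all add: tr_def conn_def mset2_eq)
qed

lemma ne94: "lam 3 False \<noteq> lam 5 False"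
proof
  assume "lam 3 False = lam 5 False"
  then have iso: "graph_iso Q3 (swapg Q3 (3, False) (5, False))" by (intro swap_iso[OF S3 des pot]) simp_all
  show False by (rule bad_tri[OF iso, of 5 1 7 7 5 9]) (simp_all add: tr_def conn_def mset2_eq)
qed

lemma ne95: "lam 3 False \<noteq> lam 5 True"
proof
  assume "lam 3 False = lam 5 True"
  then have iso: "graph_iso Q3 (swapg Q3 (3, False) (5, True))" by (intro swap_iso[OF S3 des pot]) simp_all
  show False by (rule bad_par[OF iso, of 5 7 3 11]) (simp_all add: tr_def conn_def mset2_eq)
qed

lemma ne96: "lam 3 False \<noteq> lam 6 False"
proof
  assume "lam 3 False = lam 6 False"
  then have iso: "graph_iso Q3 (swapg Q3 (3, False) (6, False))" by (intro swap_iso[OF S3 des pot]) simp_all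
  show False by (rule bad_loop[OF iso, of 3]) (simp_all add: tr_def)
qed

lemma ne97: "lam 3 False \<noteq> lam 7 True"
proof
  assume "lam 3 False = lam 7 True"
  then have iso: "graph_iso Q3 (swapg Q3 (3, False) (7, True))" by (intro swap_iso[OF S3 des pot]) simp_all
  show False by (rule bad_loop[OF iso, of 7]) (simp_all add: tr_def)
qed

lemma ne98: "lam 3 False \<noteq> lam 8 False"
proof
  assume "lam 3 False = lam 8 False"
  then have iso: "graph_iso Q3 (swapg Q3 (3, False) (8, False))" by (intro swap_iso[OF S3 des pot]) simp_all
  show False by (rule bad_par[OF iso, of 3 6 4 6]) (simp_all add: tr_def conn_def mset2_eq)
qed

lemma ne99: "lam 3 False \<noteq> lam 8 True"
proof
  assume "lam 3 False = lam 8 True"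
  then have iso: "graph_iso Q3 (swapg Q3 (3, False) (8, True))" by (intro swap_iso[OF S3 des pot]) simp_all
  show False by (rule bad_tri[OF iso, of 3 0 6 10 2 4]) (simp_all add: tr_def conn_def mset2_eq)
qed

lemma ne100: "lam 3 False \<noteq> lam 9 False"
proof
  assume "lam 3 False = lam 9 False"
  then have iso: "graph_iso Q3 (swapg Q3 (3, False) (9, False))" by (intro swap_iso[OF S3 des pot]) simp_all
  show False by (rule bad_tri[OF iso, of 5 1 3 11 7 9]) (simp_all add: tr_def conn_def mset2_eq)
qed

lemma ne101: "lam 3 False \<noteq> lam 9 True"
proof
  assume "lam 3 False = lam 9 True"
  then have iso: "graph_iso Q3 (swapg Q3 (3, False) (9, True))" by (intro swap_iso[OF S3 des pot]) simp_all
  show False by (rule bad_par[OF iso, of 7 5 7 9]) (simp_all add: tr_def conn_def mset2_eq)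
qed

lemma ne102: "lam 3 False \<noteq> lam 10 False"
proof
  assume "lam 3 False = lam 10 False"
  then have iso: "graph_iso Q3 (swapg Q3 (3, False) (10, False))" by (intro swap_iso[OF S3 des pot]) simp_all
  show False by (rule bad_loop[OF iso, of 3]) (simp_all add: tr_def)
qed

lemma ne103: "lam 3 False \<noteq> lam 11 True"
proof
  assume "lam 3 False = lam 11 True"
  then have iso: "graph_iso Q3 (swapg Q3 (3, False) (11, True))" by (intro swap_iso[OF S3 des pot]) simp_all
  show False by (rule bad_loop[OF iso, of 11]) (simp_all add: tr_def)
qed

lemma ne104: "lam 3 True \<noteq> lam 4 False"
proof
  assume "lam 3 True = lam 4 False"
  then have iso: "graph_iso Q3 (swapg Q3 (3, True) (4, False))" by (intro swap_iso[OF S3 des pot]) simp_all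
  show False by (rule bad_tri[OF iso, of 4 0 6 6 4 8]) (simp_all add: tr_def conn_def mset2_eq)
qed

lemma ne105: "lam 3 True \<noteq> lam 4 True"
proof
  assume "lam 3 True = lam 4 True"
  then have iso: "graph_iso Q3 (swapg Q3 (3, True) (4, True))" by (intro swap_iso[OF S3 des pot]) simp_all
  show False by (rule bad_par[OF iso, of 4 6 2 10]) (simp_all add: tr_def conn_def mset2_eq)
qed

lemma ne106: "lam 3 True \<noteq> lam 5 False"
proof
  assume "lam 3 True = lam 5 False"
  then have iso: "graph_iso Q3 (swapg Q3 (3, True) (5, False))" by (intro swap_iso[OF S3 des pot]) simp_all
  show False by (rule bad_par[OF iso, of 3 3 7 11]) (simp_all add: tr_def conn_def mset2_eq)
qed

lemma ne107: "lam 3 True \<noteq> lam 5 True"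
proof
  assume "lam 3 True = lam 5 True"
  then have iso: "graph_iso Q3 (swapg Q3 (3, True) (5, True))" by (intro swap_iso[OF S3 des pot]) simp_all
  show False by (rule bad_tri[OF iso, of 3 1 7 7 5 9]) (simp_all add: tr_def conn_def mset2_eq)
qed

lemma ne108: "lam 3 True \<noteq> lam 6 True"
proof
  assume "lam 3 True = lam 6 True"
  then have iso: "graph_iso Q3 (swapg Q3 (3, True) (6, True))" by (intro swap_iso[OF S3 des pot]) simp_all
  show False by (rule bad_loop[OF iso, of 6]) (simp_all add: tr_def)
qed

lemma ne109: "lam 3 True \<noteq> lam 7 False"
proof
  assume "lam 3 True = lam 7 False"
  then have iso: "graph_iso Q3 (swapg Q3 (3, True) (7, False))" by (intro swap_iso[OF S3 des pot]) simp_all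
  show False by (rule bad_loop[OF iso, of 3]) (simp_all add: tr_def)
qed

lemma ne110: "lam 3 True \<noteq> lam 8 False"
proof
  assume "lam 3 True = lam 8 False"
  then have iso: "graph_iso Q3 (swapg Q3 (3, True) (8, False))" by (intro swap_iso[OF S3 des pot]) simp_all
  show False by (rule bad_tri[OF iso, of 4 0 2 10 6 8]) (simp_all add: tr_def conn_def mset2_eq)
qed

lemma ne111: "lam 3 True \<noteq> lam 8 True"
proof
  assume "lam 3 True = lam 8 True"
  then have iso: "graph_iso Q3 (swapg Q3 (3, True) (8, True))" by (intro swap_iso[OF S3 des pot]) simp_all
  show False by (rule bad_par[OF iso, of 6 4 6 8]) (simp_all add: tr_def conn_def mset2_eq)
qed

lemma ne112: "lam 3 True \<noteq> lam 9 False"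
proof
  assume "lam 3 True = lam 9 False"
  then have iso: "graph_iso Q3 (swapg Q3 (3, True) (9, False))" by (intro swap_iso[OF S3 des pot]) simp_all
  show False by (rule bad_par[OF iso, of 3 5 7 7]) (simp_all add: tr_def conn_def mset2_eq)
qed

lemma ne113: "lam 3 True \<noteq> lam 9 True"
proof
  assume "lam 3 True = lam 9 True"
  then have iso: "graph_iso Q3 (swapg Q3 (3, True) (9, True))" by (intro swap_iso[OF S3 des pot]) simp_all
  show False by (rule bad_tri[OF iso, of 3 1 7 11 3 5]) (simp_all add: tr_def conn_def mset2_eq)
qed

lemma ne114: "lam 3 True \<noteq> lam 10 True"
proof
  assume "lam 3 True = lam 10 True"
  then have iso: "graph_iso Q3 (swapg Q3 (3, True) (10, True))" by (intro swap_iso[OF S3 des pot]) simp_all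
  show False by (rule bad_loop[OF iso, of 10]) (simp_all add: tr_def)
qed

lemma ne115: "lam 3 True \<noteq> lam 11 False"
proof
  assume "lam 3 True = lam 11 False"
  then have iso: "graph_iso Q3 (swapg Q3 (3, True) (11, False))" by (intro swap_iso[OF S3 des pot]) simp_all
  show False by (rule bad_loop[OF iso, of 3]) (simp_all add: tr_def)
qed

lemma ne116: "lam 4 False \<noteq> lam 5 False"
proof
  assume "lam 4 False = lam 5 False"
  then have iso: "graph_iso Q3 (swapg Q3 (4, False) (5, False))" by (intro swap_iso[OF S3 des pot]) simp_all
  show False by (rule bad_pent[OF iso, of 0 0 1 5 2 10 6 6 4 8]) (simp_all add: tr_def conn_def mset2_eq)
qed

lemma ne117: "lam 4 False \<noteq> lam 5 True"
proof
  assume "lam 4 False = lam 5 True"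
  then have iso: "graph_iso Q3 (swapg Q3 (4, False) (5, True))" by (intro swap_iso[OF S3 des pot]) simp_all
  show False by (rule bad_par[OF iso, of 0 0 1 4]) (simp_all add: tr_def conn_def mset2_eq)
qed

lemma ne118: "lam 4 False \<noteq> lam 6 False"
proof
  assume "lam 4 False = lam 6 False"
  then have iso: "graph_iso Q3 (swapg Q3 (4, False) (6, False))" by (intro swap_iso[OF S3 des pot]) simp_all
  show False by (rule bad_pent[OF iso, of 0 0 1 5 3 1 2 6 4 8]) (simp_all add: tr_def conn_def mset2_eq)
qed

lemma ne119: "lam 4 False \<noteq> lam 6 True"
proof
  assume "lam 4 False = lam 6 True"
  then have iso: "graph_iso Q3 (swapg Q3 (4, False) (6, True))" by (intro swap_iso[OF S3 des pot]) simp_all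
  show False by (rule bad_par[OF iso, of 4 0 4 8]) (simp_all add: tr_def conn_def mset2_eq)
qed

lemma ne120: "lam 4 False \<noteq> lam 7 True"
proof
  assume "lam 4 False = lam 7 True"
  then have iso: "graph_iso Q3 (swapg Q3 (4, False) (7, True))" by (intro swap_iso[OF S3 des pot]) simp_all
  show False by (rule bad_tri[OF iso, of 0 0 1 9 5 4]) (simp_all add: tr_def conn_def mset2_eq)
qed

lemma ne121: "lam 4 False \<noteq> lam 8 True"
proof
  assume "lam 4 False = lam 8 True"
  then have iso: "graph_iso Q3 (swapg Q3 (4, False) (8, True))" by (intro swap_iso[OF S3 des pot]) simp_all
  show False by (rule bad_loop[OF iso, of 4]) (simp_all add: tr_def)
qed

lemma ne122: "lam 4 False \<noteq> lam 9 False"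
proof
  assume "lam 4 False = lam 9 False"
  then have iso: "graph_iso Q3 (swapg Q3 (4, False) (9, False))" by (intro swap_iso[OF S3 des pot]) simp_all
  show False by (rule bad_tri[OF iso, of 4 0 5 2 4 8]) (simp_all add: tr_def conn_def mset2_eq)
qed

lemma ne123: "lam 4 False \<noteq> lam 9 True"
proof
  assume "lam 4 False = lam 9 True"
  then have iso: "graph_iso Q3 (swapg Q3 (4, False) (9, True))" by (intro swap_iso[OF S3 des pot]) simp_all
  show False by (rule bad_par[OF iso, of 0 0 1 4]) (simp_all add: tr_def conn_def mset2_eq)
qed

lemma ne124: "lam 4 False \<noteq> lam 10 False"
proof
  assume "lam 4 False = lam 10 False"
  then have iso: "graph_iso Q3 (swapg Q3 (4, False) (10, False))" by (intro swap_iso[OF S3 des pot]) simp_all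
  show False by (rule bad_loop[OF iso, of 10]) (simp_all add: tr_def)
qed

lemma ne125: "lam 4 False \<noteq> lam 11 False"
proof
  assume "lam 4 False = lam 11 False"
  then have iso: "graph_iso Q3 (swapg Q3 (4, False) (11, False))" by (intro swap_iso[OF S3 des pot]) simp_all
  show False by (rule bad_par[OF iso, of 1 2 3 11]) (simp_all add: tr_def conn_def mset2_eq)
qed

lemma ne126: "lam 4 False \<noteq> lam 11 True"
proof
  assume "lam 4 False = lam 11 True"
  then have iso: "graph_iso Q3 (swapg Q3 (4, False) (11, True))" by (intro swap_iso[OF S3 des pot]) simp_all
  show False by (rule bad_tri[OF iso, of 0 0 1 5 3 4]) (simp_all add: tr_def conn_def mset2_eq)
qed

lemma ne127: "lam 4 True \<noteq> lam 5 False"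
proof
  assume "lam 4 True = lam 5 False"
  then have iso: "graph_iso Q3 (swapg Q3 (4, True) (5, False))" by (intro swap_iso[OF S3 des pot]) simp_all
  show False by (rule bad_par[OF iso, of 0 0 1 5]) (simp_all add: tr_def conn_def mset2_eq)
qed

lemma ne128: "lam 4 True \<noteq> lam 5 True"
proof
  assume "lam 4 True = lam 5 True"
  then have iso: "graph_iso Q3 (swapg Q3 (4, True) (5, True))" by (intro swap_iso[OF S3 des pot]) simp_all
  show False by (rule bad_pent[OF iso, of 0 0 1 4 2 10 6 6 4 8]) (simp_all add: tr_def conn_def mset2_eq)
qed

lemma ne129: "lam 4 True \<noteq> lam 6 False"
proof
  assume "lam 4 True = lam 6 False"
  then have iso: "graph_iso Q3 (swapg Q3 (4, True) (6, False))" by (intro swap_iso[OF S3 des pot]) simp_all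
  show False by (rule bad_par[OF iso, of 4 6 2 10]) (simp_all add: tr_def conn_def mset2_eq)
qed

lemma ne130: "lam 4 True \<noteq> lam 6 True"
proof
  assume "lam 4 True = lam 6 True"
  then have iso: "graph_iso Q3 (swapg Q3 (4, True) (6, True))" by (intro swap_iso[OF S3 des pot]) simp_all
  show False by (rule bad_pent[OF iso, of 0 0 1 5 3 1 2 4 4 8]) (simp_all add: tr_def conn_def mset2_eq)
qed

lemma ne131: "lam 4 True \<noteq> lam 7 False"
proof
  assume "lam 4 True = lam 7 False"
  then have iso: "graph_iso Q3 (swapg Q3 (4, True) (7, False))" by (intro swap_iso[OF S3 des pot]) simp_all
  show False by (rule bad_tri[OF iso, of 0 0 1 9 5 7]) (simp_all add: tr_def conn_def mset2_eq)
qed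

lemma ne132: "lam 4 True \<noteq> lam 8 False"
proof
  assume "lam 4 True = lam 8 False"
  then have iso: "graph_iso Q3 (swapg Q3 (4, True) (8, False))" by (intro swap_iso[OF S3 des pot]) simp_all
  show False by (rule bad_loop[OF iso, of 8]) (simp_all add: tr_def)
qed

lemma ne133: "lam 4 True \<noteq> lam 9 False"
proof
  assume "lam 4 True = lam 9 False"
  then have iso: "graph_iso Q3 (swapg Q3 (4, True) (9, False))" by (intro swap_iso[OF S3 des pot]) simp_all
  show False by (rule bad_par[OF iso, of 0 0 1 9]) (simp_all add: tr_def conn_def mset2_eq)
qed

lemma ne134: "lam 4 True \<noteq> lam 9 True"
proof
  assume "lam 4 True = lam 9 True"
  then have iso: "graph_iso Q3 (swapg Q3 (4, True) (9, True))" by (intro swap_iso[OF S3 des pot]) simp_all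
  show False by (rule bad_tri[OF iso, of 8 0 4 2 5 9]) (simp_all add: tr_def conn_def mset2_eq)
qed

lemma ne135: "lam 4 True \<noteq> lam 10 True"
proof
  assume "lam 4 True = lam 10 True"
  then have iso: "graph_iso Q3 (swapg Q3 (4, True) (10, True))" by (intro swap_iso[OF S3 des pot]) simp_all
  show False by (rule bad_loop[OF iso, of 4]) (simp_all add: tr_def)
qed

lemma ne136: "lam 4 True \<noteq> lam 11 False"
proof
  assume "lam 4 True = lam 11 False"
  then have iso: "graph_iso Q3 (swapg Q3 (4, True) (11, False))" by (intro swap_iso[OF S3 des pot]) simp_all
  show False by (rule bad_tri[OF iso, of 0 0 1 5 3 11]) (simp_all add: tr_def conn_def mset2_eq)
qed

lemma ne137: "lam 4 True \<noteq> lam 11 True"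
proof
  assume "lam 4 True = lam 11 True"
  then have iso: "graph_iso Q3 (swapg Q3 (4, True) (11, True))" by (intro swap_iso[OF S3 des pot]) simp_all
  show False by (rule bad_par[OF iso, of 1 2 3 4]) (simp_all add: tr_def conn_def mset2_eq)
qed

lemma ne138: "lam 5 False \<noteq> lam 6 True"
proof
  assume "lam 5 False = lam 6 True"
  then have iso: "graph_iso Q3 (swapg Q3 (5, False) (6, True))" by (intro swap_iso[OF S3 des pot]) simp_all
  show False by (rule bad_tri[OF iso, of 0 0 1 5 4 8]) (simp_all add: tr_def conn_def mset2_eq)
qed

lemma ne139: "lam 5 False \<noteq> lam 7 False"
proof
  assume "lam 5 False = lam 7 False"
  then have iso: "graph_iso Q3 (swapg Q3 (5, False) (7, False))" by (intro swap_iso[OF S3 des pot]) simp_all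
  show False by (rule bad_pent[OF iso, of 0 0 1 5 7 3 6 6 4 8]) (simp_all add: tr_def conn_def mset2_eq)
qed

lemma ne140: "lam 5 False \<noteq> lam 7 True"
proof
  assume "lam 5 False = lam 7 True"
  then have iso: "graph_iso Q3 (swapg Q3 (5, False) (7, True))" by (intro swap_iso[OF S3 des pot]) simp_all
  show False by (rule bad_par[OF iso, of 5 1 5 9]) (simp_all add: tr_def conn_def mset2_eq)
qed

lemma ne141: "lam 5 False \<noteq> lam 8 False"
proof
  assume "lam 5 False = lam 8 False"
  then have iso: "graph_iso Q3 (swapg Q3 (5, False) (8, False))" by (intro swap_iso[OF S3 des pot]) simp_all
  show False by (rule bad_tri[OF iso, of 4 0 2 1 3 8]) (simp_all add: tr_def conn_def mset2_eq)
qed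

lemma ne142: "lam 5 False \<noteq> lam 8 True"
proof
  assume "lam 5 False = lam 8 True"
  then have iso: "graph_iso Q3 (swapg Q3 (5, False) (8, True))" by (intro swap_iso[OF S3 des pot]) simp_all
  show False by (rule bad_par[OF iso, of 0 0 1 5]) (simp_all add: tr_def conn_def mset2_eq)
qed

lemma ne143: "lam 5 False \<noteq> lam 9 True"
proof
  assume "lam 5 False = lam 9 True"
  then have iso: "graph_iso Q3 (swapg Q3 (5, False) (9, True))" by (intro swap_iso[OF S3 des pot]) simp_all
  show False by (rule bad_loop[OF iso, of 5]) (simp_all add: tr_def)
qed

lemma ne144: "lam 5 False \<noteq> lam 10 False"
proof
  assume "lam 5 False = lam 10 False"
  then have iso: "graph_iso Q3 (swapg Q3 (5, False) (10, False))" by (intro swap_iso[OF S3 des pot]) simp_all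
  show False by (rule bad_par[OF iso, of 1 2 3 10]) (simp_all add: tr_def conn_def mset2_eq)
qed

lemma ne145: "lam 5 False \<noteq> lam 10 True"
proof
  assume "lam 5 False = lam 10 True"
  then have iso: "graph_iso Q3 (swapg Q3 (5, False) (10, True))" by (intro swap_iso[OF S3 des pot]) simp_all
  show False by (rule bad_tri[OF iso, of 0 0 1 5 2 4]) (simp_all add: tr_def conn_def mset2_eq)
qed

lemma ne146: "lam 5 False \<noteq> lam 11 False"
proof
  assume "lam 5 False = lam 11 False"
  then have iso: "graph_iso Q3 (swapg Q3 (5, False) (11, False))" by (intro swap_iso[OF S3 des pot]) simp_all
  show False by (rule bad_loop[OF iso, of 11]) (simp_all add: tr_def)
qed

lemma ne147: "lam 5 True \<noteq> lam 6 False"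
proof
  assume "lam 5 True = lam 6 False"
  then have iso: "graph_iso Q3 (swapg Q3 (5, True) (6, False))" by (intro swap_iso[OF S3 des pot]) simp_all
  show False by (rule bad_tri[OF iso, of 0 0 1 6 4 8]) (simp_all add: tr_def conn_def mset2_eq)
qed

lemma ne148: "lam 5 True \<noteq> lam 7 False"
proof
  assume "lam 5 True = lam 7 False"
  then have iso: "graph_iso Q3 (swapg Q3 (5, True) (7, False))" by (intro swap_iso[OF S3 des pot]) simp_all
  show False by (rule bad_par[OF iso, of 5 7 3 11]) (simp_all add: tr_def conn_def mset2_eq)
qed

lemma ne149: "lam 5 True \<noteq> lam 7 True"
proof
  assume "lam 5 True = lam 7 True"
  then have iso: "graph_iso Q3 (swapg Q3 (5, True) (7, True))" by (intro swap_iso[OF S3 des pot]) simp_all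
  show False by (rule bad_pent[OF iso, of 0 0 1 7 7 3 6 6 4 8]) (simp_all add: tr_def conn_def mset2_eq)
qed

lemma ne150: "lam 5 True \<noteq> lam 8 False"
proof
  assume "lam 5 True = lam 8 False"
  then have iso: "graph_iso Q3 (swapg Q3 (5, True) (8, False))" by (intro swap_iso[OF S3 des pot]) simp_all
  show False by (rule bad_par[OF iso, of 0 0 1 8]) (simp_all add: tr_def conn_def mset2_eq)
qed

lemma ne151: "lam 5 True \<noteq> lam 8 True"
proof
  assume "lam 5 True = lam 8 True"
  then have iso: "graph_iso Q3 (swapg Q3 (5, True) (8, True))" by (intro swap_iso[OF S3 des pot]) simp_all
  show False by (rule bad_tri[OF iso, of 4 0 2 1 3 5]) (simp_all add: tr_def conn_def mset2_eq)
qed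

lemma ne152: "lam 5 True \<noteq> lam 9 False"
proof
  assume "lam 5 True = lam 9 False"
  then have iso: "graph_iso Q3 (swapg Q3 (5, True) (9, False))" by (intro swap_iso[OF S3 des pot]) simp_all
  show False by (rule bad_loop[OF iso, of 9]) (simp_all add: tr_def)
qed

lemma ne153: "lam 5 True \<noteq> lam 10 False"
proof
  assume "lam 5 True = lam 10 False"
  then have iso: "graph_iso Q3 (swapg Q3 (5, True) (10, False))" by (intro swap_iso[OF S3 des pot]) simp_all
  show False by (rule bad_tri[OF iso, of 0 0 1 10 2 4]) (simp_all add: tr_def conn_def mset2_eq)
qed

lemma ne154: "lam 5 True \<noteq> lam 10 True"
proof
  assume "lam 5 True = lam 10 True"
  then have iso: "graph_iso Q3 (swapg Q3 (5, True) (10, True))" by (intro swap_iso[OF S3 des pot]) simp_all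
  show False by (rule bad_par[OF iso, of 1 2 3 5]) (simp_all add: tr_def conn_def mset2_eq)
qed

lemma ne155: "lam 5 True \<noteq> lam 11 True"
proof
  assume "lam 5 True = lam 11 True"
  then have iso: "graph_iso Q3 (swapg Q3 (5, True) (11, True))" by (intro swap_iso[OF S3 des pot]) simp_all
  show False by (rule bad_loop[OF iso, of 5]) (simp_all add: tr_def)
qed

lemma ne156: "lam 6 False \<noteq> lam 7 False"
proof
  assume "lam 6 False = lam 7 False"
  then have iso: "graph_iso Q3 (swapg Q3 (6, False) (7, False))" by (intro swap_iso[OF S3 des pot]) simp_all
  show False by (rule bad_pent[OF iso, of 0 0 1 5 3 11 7 6 4 8]) (simp_all add: tr_def conn_def mset2_eq)
qed

lemma ne157: "lam 6 False \<noteq> lam 7 True"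
proof
  assume "lam 6 False = lam 7 True"
  then have iso: "graph_iso Q3 (swapg Q3 (6, False) (7, True))" by (intro swap_iso[OF S3 des pot]) simp_all
  show False by (rule bad_par[OF iso, of 2 4 5 6]) (simp_all add: tr_def conn_def mset2_eq)
qed

lemma ne158: "lam 6 False \<noteq> lam 8 False"
proof
  assume "lam 6 False = lam 8 False"
  then have iso: "graph_iso Q3 (swapg Q3 (6, False) (8, False))" by (intro swap_iso[OF S3 des pot]) simp_all
  show False by (rule bad_loop[OF iso, of 6]) (simp_all add: tr_def)
qed

lemma ne159: "lam 6 False \<noteq> lam 9 False"
proof
  assume "lam 6 False = lam 9 False"
  then have iso: "graph_iso Q3 (swapg Q3 (6, False) (9, False))" by (intro swap_iso[OF S3 des pot]) simp_all
  show False by (rule bad_par[OF iso, of 2 4 5 6]) (simp_all add: tr_def conn_def mset2_eq)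
qed

lemma ne160: "lam 6 False \<noteq> lam 9 True"
proof
  assume "lam 6 False = lam 9 True"
  then have iso: "graph_iso Q3 (swapg Q3 (6, False) (9, True))" by (intro swap_iso[OF S3 des pot]) simp_all
  show False by (rule bad_tri[OF iso, of 0 0 1 6 4 8]) (simp_all add: tr_def conn_def mset2_eq)
qed

lemma ne161: "lam 6 False \<noteq> lam 10 True"
proof
  assume "lam 6 False = lam 10 True"
  then have iso: "graph_iso Q3 (swapg Q3 (6, False) (10, True))" by (intro swap_iso[OF S3 des pot]) simp_all
  show False by (rule bad_loop[OF iso, of 10]) (simp_all add: tr_def)
qed

lemma ne162: "lam 6 False \<noteq> lam 11 False"
proof
  assume "lam 6 False = lam 11 False"
  then have iso: "graph_iso Q3 (swapg Q3 (6, False) (11, False))" by (intro swap_iso[OF S3 des pot]) simp_all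
  show False by (rule bad_tri[OF iso, of 1 2 3 11 6 10]) (simp_all add: tr_def conn_def mset2_eq)
qed

lemma ne163: "lam 6 False \<noteq> lam 11 True"
proof
  assume "lam 6 False = lam 11 True"
  then have iso: "graph_iso Q3 (swapg Q3 (6, False) (11, True))" by (intro swap_iso[OF S3 des pot]) simp_all
  show False by (rule bad_par[OF iso, of 3 6 7 11]) (simp_all add: tr_def conn_def mset2_eq)
qed

lemma ne164: "lam 6 True \<noteq> lam 7 False"
proof
  assume "lam 6 True = lam 7 False"
  then have iso: "graph_iso Q3 (swapg Q3 (6, True) (7, False))" by (intro swap_iso[OF S3 des pot]) simp_all
  show False by (rule bad_par[OF iso, of 2 4 5 7]) (simp_all add: tr_def conn_def mset2_eq)
qed

lemma ne165: "lam 6 True \<noteq> lam 7 True"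
proof
  assume "lam 6 True = lam 7 True"
  then have iso: "graph_iso Q3 (swapg Q3 (6, True) (7, True))" by (intro swap_iso[OF S3 des pot]) simp_all
  show False by (rule bad_pent[OF iso, of 0 0 1 5 3 11 7 7 4 8]) (simp_all add: tr_def conn_def mset2_eq)
qed

lemma ne166: "lam 6 True \<noteq> lam 8 True"
proof
  assume "lam 6 True = lam 8 True"
  then have iso: "graph_iso Q3 (swapg Q3 (6, True) (8, True))" by (intro swap_iso[OF S3 des pot]) simp_all
  show False by (rule bad_loop[OF iso, of 8]) (simp_all add: tr_def)
qed

lemma ne167: "lam 6 True \<noteq> lam 9 False"
proof
  assume "lam 6 True = lam 9 False"
  then have iso: "graph_iso Q3 (swapg Q3 (6, True) (9, False))" by (intro swap_iso[OF S3 des pot]) simp_all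
  show False by (rule bad_tri[OF iso, of 0 0 1 9 4 8]) (simp_all add: tr_def conn_def mset2_eq)
qed

lemma ne168: "lam 6 True \<noteq> lam 9 True"
proof
  assume "lam 6 True = lam 9 True"
  then have iso: "graph_iso Q3 (swapg Q3 (6, True) (9, True))" by (intro swap_iso[OF S3 des pot]) simp_all
  show False by (rule bad_par[OF iso, of 2 4 5 9]) (simp_all add: tr_def conn_def mset2_eq)
qed

lemma ne169: "lam 6 True \<noteq> lam 10 False"
proof
  assume "lam 6 True = lam 10 False"
  then have iso: "graph_iso Q3 (swapg Q3 (6, True) (10, False))" by (intro swap_iso[OF S3 des pot]) simp_all
  show False by (rule bad_loop[OF iso, of 6]) (simp_all add: tr_def)
qed

lemma ne170: "lam 6 True \<noteq> lam 11 False"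
proof
  assume "lam 6 True = lam 11 False"
  then have iso: "graph_iso Q3 (swapg Q3 (6, True) (11, False))" by (intro swap_iso[OF S3 des pot]) simp_all
  show False by (rule bad_par[OF iso, of 3 6 7 6]) (simp_all add: tr_def conn_def mset2_eq)
qed

lemma ne171: "lam 6 True \<noteq> lam 11 True"
proof
  assume "lam 6 True = lam 11 True"
  then have iso: "graph_iso Q3 (swapg Q3 (6, True) (11, True))" by (intro swap_iso[OF S3 des pot]) simp_all
  show False by (rule bad_tri[OF iso, of 1 2 3 6 6 10]) (simp_all add: tr_def conn_def mset2_eq)
qed

lemma ne172: "lam 7 False \<noteq> lam 8 False"
proof
  assume "lam 7 False = lam 8 False"
  then have iso: "graph_iso Q3 (swapg Q3 (7, False) (8, False))" by (intro swap_iso[OF S3 des pot]) simp_all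
  show False by (rule bad_par[OF iso, of 2 4 5 7]) (simp_all add: tr_def conn_def mset2_eq)
qed

lemma ne173: "lam 7 False \<noteq> lam 8 True"
proof
  assume "lam 7 False = lam 8 True"
  then have iso: "graph_iso Q3 (swapg Q3 (7, False) (8, True))" by (intro swap_iso[OF S3 des pot]) simp_all
  show False by (rule bad_tri[OF iso, of 0 0 1 9 5 7]) (simp_all add: tr_def conn_def mset2_eq)
qed

lemma ne174: "lam 7 False \<noteq> lam 9 False"
proof
  assume "lam 7 False = lam 9 False"
  then have iso: "graph_iso Q3 (swapg Q3 (7, False) (9, False))" by (intro swap_iso[OF S3 des pot]) simp_all
  show False by (rule bad_loop[OF iso, of 7]) (simp_all add: tr_def)
qed

lemma ne175: "lam 7 False \<noteq> lam 10 False"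
proof
  assume "lam 7 False = lam 10 False"
  then have iso: "graph_iso Q3 (swapg Q3 (7, False) (10, False))" by (intro swap_iso[OF S3 des pot]) simp_all
  show False by (rule bad_tri[OF iso, of 1 2 3 11 7 10]) (simp_all add: tr_def conn_def mset2_eq)
qed

lemma ne176: "lam 7 False \<noteq> lam 10 True"
proof
  assume "lam 7 False = lam 10 True"
  then have iso: "graph_iso Q3 (swapg Q3 (7, False) (10, True))" by (intro swap_iso[OF S3 des pot]) simp_all
  show False by (rule bad_par[OF iso, of 3 6 7 10]) (simp_all add: tr_def conn_def mset2_eq)
qed

lemma ne177: "lam 7 False \<noteq> lam 11 True"
proof
  assume "lam 7 False = lam 11 True"
  then have iso: "graph_iso Q3 (swapg Q3 (7, False) (11, True))" by (intro swap_iso[OF S3 des pot]) simp_all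
  show False by (rule bad_loop[OF iso, of 11]) (simp_all add: tr_def)
qed

lemma ne178: "lam 7 True \<noteq> lam 8 False"
proof
  assume "lam 7 True = lam 8 False"
  then have iso: "graph_iso Q3 (swapg Q3 (7, True) (8, False))" by (intro swap_iso[OF S3 des pot]) simp_all
  show False by (rule bad_tri[OF iso, of 0 0 1 9 5 8]) (simp_all add: tr_def conn_def mset2_eq)
qed

lemma ne179: "lam 7 True \<noteq> lam 8 True"
proof
  assume "lam 7 True = lam 8 True"
  then have iso: "graph_iso Q3 (swapg Q3 (7, True) (8, True))" by (intro swap_iso[OF S3 des pot]) simp_all
  show False by (rule bad_par[OF iso, of 2 4 5 8]) (simp_all add: tr_def conn_def mset2_eq)
qed

lemma ne180: "lam 7 True \<noteq> lam 9 True"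
proof
  assume "lam 7 True = lam 9 True"
  then have iso: "graph_iso Q3 (swapg Q3 (7, True) (9, True))" by (intro swap_iso[OF S3 des pot]) simp_all
  show False by (rule bad_loop[OF iso, of 9]) (simp_all add: tr_def)
qed

lemma ne181: "lam 7 True \<noteq> lam 10 False"
proof
  assume "lam 7 True = lam 10 False"
  then have iso: "graph_iso Q3 (swapg Q3 (7, True) (10, False))" by (intro swap_iso[OF S3 des pot]) simp_all
  show False by (rule bad_par[OF iso, of 3 6 7 7]) (simp_all add: tr_def conn_def mset2_eq)
qed

lemma ne182: "lam 7 True \<noteq> lam 10 True"
proof
  assume "lam 7 True = lam 10 True"
  then have iso: "graph_iso Q3 (swapg Q3 (7, True) (10, True))" by (intro swap_iso[OF S3 des pot]) simp_all
  show False by (rule bad_tri[OF iso, of 1 2 3 11 7 7]) (simp_all add: tr_def conn_def mset2_eq)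
qed

lemma ne183: "lam 7 True \<noteq> lam 11 False"
proof
  assume "lam 7 True = lam 11 False"
  then have iso: "graph_iso Q3 (swapg Q3 (7, True) (11, False))" by (intro swap_iso[OF S3 des pot]) simp_all
  show False by (rule bad_loop[OF iso, of 7]) (simp_all add: tr_def)
qed

lemma ne184: "lam 8 False \<noteq> lam 9 False"
proof
  assume "lam 8 False = lam 9 False"
  then have iso: "graph_iso Q3 (swapg Q3 (8, False) (9, False))" by (intro swap_iso[OF S3 des pot]) simp_all
  show False by (rule bad_pent[OF iso, of 0 0 1 5 3 11 7 7 5 8]) (simp_all add: tr_def conn_def mset2_eq)
qed

lemma ne185: "lam 8 False \<noteq> lam 9 True"
proof
  assume "lam 8 False = lam 9 True"
  then have iso: "graph_iso Q3 (swapg Q3 (8, False) (9, True))" by (intro swap_iso[OF S3 des pot]) simp_all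
  show False by (rule bad_par[OF iso, of 0 0 1 8]) (simp_all add: tr_def conn_def mset2_eq)
qed

lemma ne186: "lam 8 False \<noteq> lam 10 False"
proof
  assume "lam 8 False = lam 10 False"
  then have iso: "graph_iso Q3 (swapg Q3 (8, False) (10, False))" by (intro swap_iso[OF S3 des pot]) simp_all
  show False by (rule bad_pent[OF iso, of 0 0 1 5 3 11 7 3 6 8]) (simp_all add: tr_def conn_def mset2_eq)
qed

lemma ne187: "lam 8 False \<noteq> lam 10 True"
proof
  assume "lam 8 False = lam 10 True"
  then have iso: "graph_iso Q3 (swapg Q3 (8, False) (10, True))" by (intro swap_iso[OF S3 des pot]) simp_all
  show False by (rule bad_par[OF iso, of 4 0 2 8]) (simp_all add: tr_def conn_def mset2_eq)
qed

lemma ne188: "lam 8 False \<noteq> lam 11 True"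
proof
  assume "lam 8 False = lam 11 True"
  then have iso: "graph_iso Q3 (swapg Q3 (8, False) (11, True))" by (intro swap_iso[OF S3 des pot]) simp_all
  show False by (rule bad_tri[OF iso, of 0 0 1 5 3 8]) (simp_all add: tr_def conn_def mset2_eq)
qed

lemma ne189: "lam 8 True \<noteq> lam 9 False"
proof
  assume "lam 8 True = lam 9 False"
  then have iso: "graph_iso Q3 (swapg Q3 (8, True) (9, False))" by (intro swap_iso[OF S3 des pot]) simp_all
  show False by (rule bad_par[OF iso, of 0 0 1 9]) (simp_all add: tr_def conn_def mset2_eq)
qed

lemma ne190: "lam 8 True \<noteq> lam 9 True"
proof
  assume "lam 8 True = lam 9 True"
  then have iso: "graph_iso Q3 (swapg Q3 (8, True) (9, True))" by (intro swap_iso[OF S3 des pot]) simp_all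
  show False by (rule bad_pent[OF iso, of 0 0 1 5 3 11 7 7 5 9]) (simp_all add: tr_def conn_def mset2_eq)
qed

lemma ne191: "lam 8 True \<noteq> lam 10 False"
proof
  assume "lam 8 True = lam 10 False"
  then have iso: "graph_iso Q3 (swapg Q3 (8, True) (10, False))" by (intro swap_iso[OF S3 des pot]) simp_all
  show False by (rule bad_par[OF iso, of 4 0 2 10]) (simp_all add: tr_def conn_def mset2_eq)
qed

lemma ne192: "lam 8 True \<noteq> lam 10 True"
proof
  assume "lam 8 True = lam 10 True"
  then have iso: "graph_iso Q3 (swapg Q3 (8, True) (10, True))" by (intro swap_iso[OF S3 des pot]) simp_all
  show False by (rule bad_pent[OF iso, of 0 0 1 5 3 11 7 3 6 10]) (simp_all add: tr_def conn_def mset2_eq)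
qed

lemma ne193: "lam 8 True \<noteq> lam 11 False"
proof
  assume "lam 8 True = lam 11 False"
  then have iso: "graph_iso Q3 (swapg Q3 (8, True) (11, False))" by (intro swap_iso[OF S3 des pot]) simp_all
  show False by (rule bad_tri[OF iso, of 0 0 1 5 3 11]) (simp_all add: tr_def conn_def mset2_eq)
qed

lemma ne194: "lam 9 False \<noteq> lam 10 True"
proof
  assume "lam 9 False = lam 10 True"
  then have iso: "graph_iso Q3 (swapg Q3 (9, False) (10, True))" by (intro swap_iso[OF S3 des pot]) simp_all
  show False by (rule bad_tri[OF iso, of 0 0 1 9 2 4]) (simp_all add: tr_def conn_def mset2_eq)
qed

lemma ne195: "lam 9 False \<noteq> lam 11 False"
proof
  assume "lam 9 False = lam 11 False"
  then have iso: "graph_iso Q3 (swapg Q3 (9, False) (11, False))" by (intro swap_iso[OF S3 des pot]) simp_all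
  show False by (rule bad_pent[OF iso, of 0 0 1 5 3 11 5 2 4 8]) (simp_all add: tr_def conn_def mset2_eq)
qed

lemma ne196: "lam 9 False \<noteq> lam 11 True"
proof
  assume "lam 9 False = lam 11 True"
  then have iso: "graph_iso Q3 (swapg Q3 (9, False) (11, True))" by (intro swap_iso[OF S3 des pot]) simp_all
  show False by (rule bad_par[OF iso, of 5 1 3 9]) (simp_all add: tr_def conn_def mset2_eq)
qed

lemma ne197: "lam 9 True \<noteq> lam 10 False"
proof
  assume "lam 9 True = lam 10 False"
  then have iso: "graph_iso Q3 (swapg Q3 (9, True) (10, False))" by (intro swap_iso[OF S3 des pot]) simp_all
  show False by (rule bad_tri[OF iso, of 0 0 1 10 2 4]) (simp_all add: tr_def conn_def mset2_eq)
qed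

lemma ne198: "lam 9 True \<noteq> lam 11 False"
proof
  assume "lam 9 True = lam 11 False"
  then have iso: "graph_iso Q3 (swapg Q3 (9, True) (11, False))" by (intro swap_iso[OF S3 des pot]) simp_all
  show False by (rule bad_par[OF iso, of 5 1 3 11]) (simp_all add: tr_def conn_def mset2_eq)
qed

lemma ne199: "lam 9 True \<noteq> lam 11 True"
proof
  assume "lam 9 True = lam 11 True"
  then have iso: "graph_iso Q3 (swapg Q3 (9, True) (11, True))" by (intro swap_iso[OF S3 des pot]) simp_all
  show False by (rule bad_pent[OF iso, of 0 0 1 5 3 9 5 2 4 8]) (simp_all add: tr_def conn_def mset2_eq)
qed

lemma ne200: "lam 10 False \<noteq> lam 11 False"
proof
  assume "lam 10 False = lam 11 False"
  then have iso: "graph_iso Q3 (swapg Q3 (10, False) (11, False))" by (intro swap_iso[OF S3 des pot]) simp_all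
  show False by (rule bad_pent[OF iso, of 0 0 1 5 3 11 6 6 4 8]) (simp_all add: tr_def conn_def mset2_eq)
qed

lemma ne201: "lam 10 False \<noteq> lam 11 True"
proof
  assume "lam 10 False = lam 11 True"
  then have iso: "graph_iso Q3 (swapg Q3 (10, False) (11, True))" by (intro swap_iso[OF S3 des pot]) simp_all
  show False by (rule bad_par[OF iso, of 1 2 3 10]) (simp_all add: tr_def conn_def mset2_eq)
qed

lemma ne202: "lam 10 True \<noteq> lam 11 False"
proof
  assume "lam 10 True = lam 11 False"
  then have iso: "graph_iso Q3 (swapg Q3 (10, True) (11, False))" by (intro swap_iso[OF S3 des pot]) simp_all
  show False by (rule bad_par[OF iso, of 1 2 3 11]) (simp_all add: tr_def conn_def mset2_eq)
qed

lemma ne203: "lam 10 True \<noteq> lam 11 True"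
proof
  assume "lam 10 True = lam 11 True"
  then have iso: "graph_iso Q3 (swapg Q3 (10, True) (11, True))" by (intro swap_iso[OF S3 des pot]) simp_all
  show False by (rule bad_pent[OF iso, of 0 0 1 5 3 10 6 6 4 8]) (simp_all add: tr_def conn_def mset2_eq)
qed

lemmas neqs = ne0 ne1 ne2 ne3 ne4 ne5 ne6 ne7 ne8 ne9 ne10 ne11 ne12 ne13 ne14 ne15 ne16 ne17 ne18 ne19 ne20 ne21 ne22 ne23 ne24 ne25 ne26 ne27 ne28 ne29 ne30 ne31 ne32 ne33 ne34 ne35 ne36 ne37 ne38 ne39 ne40 ne41 ne42 ne43 ne44 ne45 ne46 ne47 ne48 ne49 ne50 ne51 ne52 ne53 ne54 ne55 ne56 ne57 ne58 ne59 ne60 ne61 ne62 ne63 ne64 ne65 ne66 ne67 ne68 ne69 ne70 ne71 ne72 ne73 ne74 ne75 ne76 ne77 ne78 ne79 ne80 ne81 ne82 ne83 ne84 ne85 ne86 ne87 ne88 ne89 ne90 ne91 ne92 ne93 ne94 ne95 ne96 ne97 ne98 ne99 ne100 ne101 ne102 ne103 ne104 ne105 ne106 ne107 ne108 ne109 ne110 ne111 ne112 ne113 ne114 ne115 ne116 ne117 ne118 ne119 ne120 ne121 ne122 ne123 ne124 ne125 ne126 ne127 ne128 ne129 ne130 ne131 ne132 ne133 ne134 ne135 ne136 ne137 ne138 ne139 ne140 ne141 ne142 ne143 ne144 ne145 ne146 ne147 ne148 ne149 ne150 ne151 ne152 ne153 ne154 ne155 ne156 ne157 ne158 ne159 ne160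 ne161 ne162 ne163 ne164 ne165 ne166 ne167 ne168 ne169 ne170 ne171 ne172 ne173 ne174 ne175 ne176 ne177 ne178 ne179 ne180 ne181 ne182 ne183 ne184 ne185 ne186 ne187 ne188 ne189 ne190 ne191 ne192 ne193 ne194 ne195 ne196 ne197 ne198 ne199 ne200 ne201 ne202 ne203

lemma dsg:
  "lam 0 True = hat (lam 0 False)"
  "lam 1 True = hat (lam 1 False)"
  "lam 2 True = hat (lam 2 False)"
  "lam 3 True = hat (lam 3 False)"
  "lam 4 True = hat (lam 4 False)"
  "lam 5 True = hat (lam 5 False)"
  "lam 6 True = hat (lam 6 False)"
  "lam 7 True = hat (lam 7 False)"
  "lam 8 True = hat (lam 8 False)"
  "lam 9 True = hat (lam 9 False)"
  "lam 10 True = hat (lam 10 False)"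
  "lam 11 True = hat (lam 11 False)"
  using des unfolding assembly_design_def by simp_all

lemma tile0: "tile_at Q3 lam 0 = {#lam 0 True, lam 4 True, lam 8 True#}"
  unfolding tile_at_HS HS_Q3 by simp

lemma tile1: "tile_at Q3 lam 1 = {#lam 0 False, lam 5 True, lam 9 True#}"
  unfolding tile_at_HS HS_Q3 by simp

lemma tile2: "tile_at Q3 lam 2 = {#lam 1 True, lam 4 False, lam 10 True#}"
  unfolding tile_at_HS HS_Q3 by simp

lemma tile3: "tile_at Q3 lam 3 = {#lam 1 False, lam 5 False, lam 11 True#}"
  unfolding tile_at_HS HS_Q3 by simp

lemma tile4: "tile_at Q3 lam 4 = {#lam 2 True, lam 6 True, lam 8 False#}"
  unfolding tile_at_HS HS_Q3 by simp

lemma tile5: "tile_at Q3 lam 5 = {#lam 2 False, lam 7 True, lam 9 False#}"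
  unfolding tile_at_HS HS_Q3 by simp

lemma tile6: "tile_at Q3 lam 6 = {#lam 3 True, lam 6 False, lam 10 False#}"
  unfolding tile_at_HS HS_Q3 by simp

lemma tile7: "tile_at Q3 lam 7 = {#lam 3 False, lam 7 False, lam 11 False#}"
  unfolding tile_at_HS HS_Q3 by simp

lemma tne_0_1: "tile_at Q3 lam 0 \<noteq> tile_at Q3 lam 1"
  unfolding tile0 tile1 mset3_eq using ne128 ne134 ne23 ne29 by blast

lemma tne_0_2: "tile_at Q3 lam 0 \<noteq> tile_at Q3 lam 2"
  unfolding tile0 tile2 mset3_eq using ne18 ne22 ne31 by blast

lemma teq_0_3: "tile_at Q3 lam 0 = tile_at Q3 lam 3 \<Longrightarrow> lam 0 True = lam 5 False \<and> lam 4 True = lam 1 False \<and> lam 8 True = lam 11 True"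
  unfolding tile0 tile3 mset3_eq using ne137 ne17 ne33 by blast

lemma tne_0_4: "tile_at Q3 lam 0 \<noteq> tile_at Q3 lam 4"
  unfolding tile0 tile4 mset3_eq using ne20 ne25 ne28 by blast

lemma teq_0_5: "tile_at Q3 lam 0 = tile_at Q3 lam 5 \<Longrightarrow> lam 0 True = lam 9 False \<and> lam 4 True = lam 7 True \<and> lam 8 True = lam 2 False"
  unfolding tile0 tile5 mset3_eq using ne19 ne27 ne67[THEN not_sym] by blast

lemma teq_0_6: "tile_at Q3 lam 0 = tile_at Q3 lam 6 \<Longrightarrow> lam 0 True = lam 3 True \<and> lam 4 True = lam 10 False \<and> lam 8 True = lam 6 False"
  unfolding tile0 tile6 mset3_eq using ne129 ne24 ne30 by blast

lemma tne_0_7: "tile_at Q3 lam 0 \<noteq> tile_at Q3 lam 7"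
  unfolding tile0 tile7 mset3_eq using ne21 ne26 ne32 by blast

lemma teq_1_2: "tile_at Q3 lam 1 = tile_at Q3 lam 2 \<Longrightarrow> lam 0 False = lam 4 False \<and> lam 5 True = lam 1 True \<and> lam 9 True = lam 10 True"
  unfolding tile1 tile2 mset3_eq using ne1 ne14 ne154 by blast

lemma tne_1_3: "tile_at Q3 lam 1 \<noteq> tile_at Q3 lam 3"
  unfolding tile1 tile3 mset3_eq using ne0 ne16 ne6 by blast

lemma teq_1_4: "tile_at Q3 lam 1 = tile_at Q3 lam 4 \<Longrightarrow> lam 0 False = lam 8 False \<and> lam 5 True = lam 6 True \<and> lam 9 True = lam 2 True"
  unfolding tile1 tile4 mset3_eq using ne3 ne8 ne83[THEN not_sym] by blast

lemma tne_1_5: "tile_at Q3 lam 1 \<noteq> tile_at Q3 lam 5"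
  unfolding tile1 tile5 mset3_eq using ne10 ne12 ne2 by blast

lemma tne_1_6: "tile_at Q3 lam 1 \<noteq> tile_at Q3 lam 6"
  unfolding tile1 tile6 mset3_eq using ne13 ne4 ne7 by blast

lemma teq_1_7: "tile_at Q3 lam 1 = tile_at Q3 lam 7 \<Longrightarrow> lam 0 False = lam 3 False \<and> lam 5 True = lam 11 False \<and> lam 9 True = lam 7 False"
  unfolding tile1 tile7 mset3_eq using ne148 ne15 ne9 by blast

lemma tne_2_3: "tile_at Q3 lam 2 \<noteq> tile_at Q3 lam 3"
  unfolding tile2 tile3 mset3_eq using ne116 ne126 ne53 ne63 by blast

lemma teq_2_4: "tile_at Q3 lam 2 = tile_at Q3 lam 4 \<Longrightarrow> lam 1 True = lam 2 True \<and> lam 4 False = lam 8 False \<and> lam 10 True = lam 6 True"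
  unfolding tile2 tile4 mset3_eq using ne119 ne55 ne58 by blast

lemma tne_2_5: "tile_at Q3 lam 2 \<noteq> tile_at Q3 lam 5"
  unfolding tile2 tile5 mset3_eq using ne49 ne57 ne60 by blast

lemma tne_2_6: "tile_at Q3 lam 2 \<noteq> tile_at Q3 lam 6"
  unfolding tile2 tile6 mset3_eq using ne51 ne54 ne62 by blast

lemma teq_2_7: "tile_at Q3 lam 2 = tile_at Q3 lam 7 \<Longrightarrow> lam 1 True = lam 11 False \<and> lam 4 False = lam 7 False \<and> lam 10 True = lam 3 False"
  unfolding tile2 tile7 mset3_eq using ne50 ne56 ne92[THEN not_sym] by blast

lemma tne_3_4: "tile_at Q3 lam 3 \<noteq> tile_at Q3 lam 4"
  unfolding tile3 tile4 mset3_eq using ne34 ne40 ne43 by blast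

lemma teq_3_5: "tile_at Q3 lam 3 = tile_at Q3 lam 5 \<Longrightarrow> lam 1 False = lam 2 False \<and> lam 5 False = lam 9 False \<and> lam 11 True = lam 7 True"
  unfolding tile3 tile5 mset3_eq using ne140 ne42 ne45 by blast

lemma teq_3_6: "tile_at Q3 lam 3 = tile_at Q3 lam 6 \<Longrightarrow> lam 1 False = lam 10 False \<and> lam 5 False = lam 6 False \<and> lam 11 True = lam 3 True"
  unfolding tile3 tile6 mset3_eq using ne106[THEN not_sym] ne36 ne39 by blast

lemma tne_3_7: "tile_at Q3 lam 3 \<noteq> tile_at Q3 lam 7"
  unfolding tile3 tile7 mset3_eq using ne35 ne41 ne48 by blast

lemma tne_4_5: "tile_at Q3 lam 4 \<noteq> tile_at Q3 lam 5"
  unfolding tile4 tile5 mset3_eq using ne165 ne167 ne85 ne87 by blast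

lemma tne_4_6: "tile_at Q3 lam 4 \<noteq> tile_at Q3 lam 6"
  unfolding tile4 tile6 mset3_eq using ne79 ne84 ne88 by blast

lemma teq_4_7: "tile_at Q3 lam 4 = tile_at Q3 lam 7 \<Longrightarrow> lam 2 True = lam 7 False \<and> lam 6 True = lam 3 False \<and> lam 8 False = lam 11 False"
  unfolding tile4 tile7 mset3_eq using ne170 ne78 ne90 by blast

lemma teq_5_6: "tile_at Q3 lam 5 = tile_at Q3 lam 6 \<Longrightarrow> lam 2 False = lam 6 False \<and> lam 7 True = lam 3 True \<and> lam 9 False = lam 10 False"
  unfolding tile5 tile6 mset3_eq using ne181 ne65 ne74 by blast

lemma tne_5_7: "tile_at Q3 lam 5 \<noteq> tile_at Q3 lam 7"
  unfolding tile5 tile7 mset3_eq using ne64 ne71 ne76 by blast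

lemma tne_6_7: "tile_at Q3 lam 6 \<noteq> tile_at Q3 lam 7"
  unfolding tile6 tile7 mset3_eq using ne109 ne115 ne156 ne162 by blast

lemma tB_0_3_5: "\<not> (tile_at Q3 lam 0 = tile_at Q3 lam 3 \<and> tile_at Q3 lam 0 = tile_at Q3 lam 5)"
  using teq_0_3 teq_0_5 ne42 dsg by (metis (no_types) hat_hat)

lemma tB_0_3_6: "\<not> (tile_at Q3 lam 0 = tile_at Q3 lam 3 \<and> tile_at Q3 lam 0 = tile_at Q3 lam 6)"
  using teq_0_3 teq_0_6 ne95 dsg by (metis (no_types) hat_hat)

lemma tB_0_5_6: "\<not> (tile_at Q3 lam 0 = tile_at Q3 lam 5 \<and> tile_at Q3 lam 0 = tile_at Q3 lam 6)"
  using teq_0_5 teq_0_6 ne101 dsg by (metis (no_types) hat_hat)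

lemma tB_3_0_5: "\<not> (tile_at Q3 lam 3 = tile_at Q3 lam 0 \<and> tile_at Q3 lam 3 = tile_at Q3 lam 5)"
  using teq_0_3 teq_3_5 ne67 dsg by (metis (no_types) hat_hat)

lemma tB_3_0_6: "\<not> (tile_at Q3 lam 3 = tile_at Q3 lam 0 \<and> tile_at Q3 lam 3 = tile_at Q3 lam 6)"
  using teq_0_3 teq_3_6 ne8 dsg by (metis (no_types) hat_hat)

lemma tB_3_5_6: "\<not> (tile_at Q3 lam 3 = tile_at Q3 lam 5 \<and> tile_at Q3 lam 3 = tile_at Q3 lam 6)"
  using teq_3_5 teq_3_6 ne74 dsg by (metis (no_types) hat_hat)

lemma tB_5_0_3: "\<not> (tile_at Q3 lam 5 = tile_at Q3 lam 0 \<and> tile_at Q3 lam 5 = tile_at Q3 lam 3)"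
  using teq_0_5 teq_3_5 ne44 dsg by (metis (no_types) hat_hat)

lemma tB_5_0_6: "\<not> (tile_at Q3 lam 5 = tile_at Q3 lam 0 \<and> tile_at Q3 lam 5 = tile_at Q3 lam 6)"
  using teq_0_5 teq_5_6 ne14 dsg by (metis (no_types) hat_hat)

lemma tB_5_3_6: "\<not> (tile_at Q3 lam 5 = tile_at Q3 lam 3 \<and> tile_at Q3 lam 5 = tile_at Q3 lam 6)"
  using teq_3_5 teq_5_6 ne39 dsg by (metis (no_types) hat_hat)

lemma tB_6_0_3: "\<not> (tile_at Q3 lam 6 = tile_at Q3 lam 0 \<and> tile_at Q3 lam 6 = tile_at Q3 lam 3)"
  using teq_0_6 teq_3_6 ne15 dsg by (metis (no_types) hat_hat)

lemma tB_6_0_5: "\<not> (tile_at Q3 lam 6 = tile_at Q3 lam 0 \<and> tile_at Q3 lam 6 = tile_at Q3 lam 5)"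
  using teq_0_6 teq_5_6 ne9 dsg by (metis (no_types) hat_hat)

lemma tB_6_3_5: "\<not> (tile_at Q3 lam 6 = tile_at Q3 lam 3 \<and> tile_at Q3 lam 6 = tile_at Q3 lam 5)"
  using teq_3_6 teq_5_6 ne45 dsg by (metis (no_types) hat_hat)

lemma tB_1_2_4: "\<not> (tile_at Q3 lam 1 = tile_at Q3 lam 2 \<and> tile_at Q3 lam 1 = tile_at Q3 lam 4)"
  using teq_1_2 teq_1_4 ne39 dsg by (metis (no_types) hat_hat)

lemma tB_1_2_7: "\<not> (tile_at Q3 lam 1 = tile_at Q3 lam 2 \<and> tile_at Q3 lam 1 = tile_at Q3 lam 7)"
  using teq_1_2 teq_1_7 ne92 dsg by (metis (no_types) hat_hat)

lemma tB_1_4_7: "\<not> (tile_at Q3 lam 1 = tile_at Q3 lam 4 \<and> tile_at Q3 lam 1 = tile_at Q3 lam 7)"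
  using teq_1_4 teq_1_7 ne98 dsg by (metis (no_types) hat_hat)

lemma tB_2_1_4: "\<not> (tile_at Q3 lam 2 = tile_at Q3 lam 1 \<and> tile_at Q3 lam 2 = tile_at Q3 lam 4)"
  using teq_1_2 teq_2_4 ne68 dsg by (metis (no_types) hat_hat)

lemma tB_2_1_7: "\<not> (tile_at Q3 lam 2 = tile_at Q3 lam 1 \<and> tile_at Q3 lam 2 = tile_at Q3 lam 7)"
  using teq_1_2 teq_2_7 ne9 dsg by (metis (no_types) hat_hat)

lemma tB_2_4_7: "\<not> (tile_at Q3 lam 2 = tile_at Q3 lam 4 \<and> tile_at Q3 lam 2 = tile_at Q3 lam 7)"
  using teq_2_4 teq_2_7 ne77 dsg by (metis (no_types) hat_hat)

lemma tB_4_1_2: "\<not> (tile_at Q3 lam 4 = tile_at Q3 lam 1 \<and> tile_at Q3 lam 4 = tile_at Q3 lam 2)"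
  using teq_1_4 teq_2_4 ne45 dsg by (metis (no_types) hat_hat)

lemma tB_4_1_7: "\<not> (tile_at Q3 lam 4 = tile_at Q3 lam 1 \<and> tile_at Q3 lam 4 = tile_at Q3 lam 7)"
  using teq_1_4 teq_4_7 ne15 dsg by (metis (no_types) hat_hat)

lemma tB_4_2_7: "\<not> (tile_at Q3 lam 4 = tile_at Q3 lam 2 \<and> tile_at Q3 lam 4 = tile_at Q3 lam 7)"
  using teq_2_4 teq_4_7 ne42 dsg by (metis (no_types) hat_hat)

lemma tB_7_1_2: "\<not> (tile_at Q3 lam 7 = tile_at Q3 lam 1 \<and> tile_at Q3 lam 7 = tile_at Q3 lam 2)"
  using teq_1_7 teq_2_7 ne14 dsg by (metis (no_types) hat_hat)

lemma tB_7_1_4: "\<not> (tile_at Q3 lam 7 = tile_at Q3 lam 1 \<and> tile_at Q3 lam 7 = tile_at Q3 lam 4)"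
  using teq_1_7 teq_4_7 ne8 dsg by (metis (no_types) hat_hat)

lemma tB_7_2_4: "\<not> (tile_at Q3 lam 7 = tile_at Q3 lam 2 \<and> tile_at Q3 lam 7 = tile_at Q3 lam 4)"
  using teq_2_7 teq_4_7 ne44 dsg by (metis (no_types) hat_hat)

lemma tC_0_3_5_6_1_2: "\<not> (tile_at Q3 lam 0 = tile_at Q3 lam 3 \<and> tile_at Q3 lam 5 = tile_at Q3 lam 6 \<and> tile_at Q3 lam 1 = tile_at Q3 lam 2)"
  using teq_0_3 teq_5_6 teq_1_2 ne1 dsg by (metis (no_types) hat_hat)

lemma tC_0_3_5_6_1_4: "\<not> (tile_at Q3 lam 0 = tile_at Q3 lam 3 \<and> tile_at Q3 lam 5 = tile_at Q3 lam 6 \<and> tile_at Q3 lam 1 = tile_at Q3 lam 4)"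
  using teq_0_3 teq_5_6 teq_1_4 ne3 dsg by (metis (no_types) hat_hat)

lemma tC_0_3_5_6_1_7: "\<not> (tile_at Q3 lam 0 = tile_at Q3 lam 3 \<and> tile_at Q3 lam 5 = tile_at Q3 lam 6 \<and> tile_at Q3 lam 1 = tile_at Q3 lam 7)"
  using teq_0_3 teq_5_6 teq_1_7 ne9 dsg by (metis (no_types) hat_hat)

lemma tC_0_3_5_6_2_4: "\<not> (tile_at Q3 lam 0 = tile_at Q3 lam 3 \<and> tile_at Q3 lam 5 = tile_at Q3 lam 6 \<and> tile_at Q3 lam 2 = tile_at Q3 lam 4)"
  using teq_0_3 teq_5_6 teq_2_4 ne39 dsg by (metis (no_types) hat_hat)

lemma tC_0_3_5_6_2_7: "\<not> (tile_at Q3 lam 0 = tile_at Q3 lam 3 \<and> tile_at Q3 lam 5 = tile_at Q3 lam 6 \<and> tile_at Q3 lam 2 = tile_at Q3 lam 7)"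
  using teq_0_3 teq_5_6 teq_2_7 ne36 dsg by (metis (no_types) hat_hat)

lemma tC_0_3_5_6_4_7: "\<not> (tile_at Q3 lam 0 = tile_at Q3 lam 3 \<and> tile_at Q3 lam 5 = tile_at Q3 lam 6 \<and> tile_at Q3 lam 4 = tile_at Q3 lam 7)"
  using teq_0_3 teq_5_6 teq_4_7 ne65 dsg by (metis (no_types) hat_hat)

lemma tC_0_5_3_6_1_2: "\<not> (tile_at Q3 lam 0 = tile_at Q3 lam 5 \<and> tile_at Q3 lam 3 = tile_at Q3 lam 6 \<and> tile_at Q3 lam 1 = tile_at Q3 lam 2)"
  using teq_0_5 teq_3_6 teq_1_2 ne1 dsg by (metis (no_types) hat_hat)

lemma tC_0_5_3_6_1_4: "\<not> (tile_at Q3 lam 0 = tile_at Q3 lam 5 \<and> tile_at Q3 lam 3 = tile_at Q3 lam 6 \<and> tile_at Q3 lam 1 = tile_at Q3 lam 4)"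
  using teq_0_5 teq_3_6 teq_1_4 ne3 dsg by (metis (no_types) hat_hat)

lemma tC_0_5_3_6_1_7: "\<not> (tile_at Q3 lam 0 = tile_at Q3 lam 5 \<and> tile_at Q3 lam 3 = tile_at Q3 lam 6 \<and> tile_at Q3 lam 1 = tile_at Q3 lam 7)"
  using teq_0_5 teq_3_6 teq_1_7 ne8 dsg by (metis (no_types) hat_hat)

lemma tC_0_5_3_6_2_4: "\<not> (tile_at Q3 lam 0 = tile_at Q3 lam 5 \<and> tile_at Q3 lam 3 = tile_at Q3 lam 6 \<and> tile_at Q3 lam 2 = tile_at Q3 lam 4)"
  using teq_0_5 teq_3_6 teq_2_4 ne39 dsg by (metis (no_types) hat_hat)

lemma tC_0_5_3_6_2_7: "\<not> (tile_at Q3 lam 0 = tile_at Q3 lam 5 \<and> tile_at Q3 lam 3 = tile_at Q3 lam 6 \<and> tile_at Q3 lam 2 = tile_at Q3 lam 7)"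
  using teq_0_5 teq_3_6 teq_2_7 ne36 dsg by (metis (no_types) hat_hat)

lemma tC_0_5_3_6_4_7: "\<not> (tile_at Q3 lam 0 = tile_at Q3 lam 5 \<and> tile_at Q3 lam 3 = tile_at Q3 lam 6 \<and> tile_at Q3 lam 4 = tile_at Q3 lam 7)"
  using teq_0_5 teq_3_6 teq_4_7 ne65 dsg by (metis (no_types) hat_hat)

lemma tC_0_6_3_5_1_2: "\<not> (tile_at Q3 lam 0 = tile_at Q3 lam 6 \<and> tile_at Q3 lam 3 = tile_at Q3 lam 5 \<and> tile_at Q3 lam 1 = tile_at Q3 lam 2)"
  using teq_0_6 teq_3_5 teq_1_2 ne1 dsg by (metis (no_types) hat_hat)

lemma tC_0_6_3_5_1_4: "\<not> (tile_at Q3 lam 0 = tile_at Q3 lam 6 \<and> tile_at Q3 lam 3 = tile_at Q3 lam 5 \<and> tile_at Q3 lam 1 = tile_at Q3 lam 4)"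
  using teq_0_6 teq_3_5 teq_1_4 ne1 dsg by (metis (no_types) hat_hat)

lemma tC_0_6_3_5_1_7: "\<not> (tile_at Q3 lam 0 = tile_at Q3 lam 6 \<and> tile_at Q3 lam 3 = tile_at Q3 lam 5 \<and> tile_at Q3 lam 1 = tile_at Q3 lam 7)"
  using teq_0_6 teq_3_5 teq_1_7 ne140 dsg by (metis (no_types) hat_hat)

lemma tC_0_6_3_5_2_4: "\<not> (tile_at Q3 lam 0 = tile_at Q3 lam 6 \<and> tile_at Q3 lam 3 = tile_at Q3 lam 5 \<and> tile_at Q3 lam 2 = tile_at Q3 lam 4)"
  using teq_0_6 teq_3_5 teq_2_4 ne119 dsg by (metis (no_types) hat_hat)

lemma tC_0_6_3_5_2_7: "\<not> (tile_at Q3 lam 0 = tile_at Q3 lam 6 \<and> tile_at Q3 lam 3 = tile_at Q3 lam 5 \<and> tile_at Q3 lam 2 = tile_at Q3 lam 7)"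
  using teq_0_6 teq_3_5 teq_2_7 ne1 dsg by (metis (no_types) hat_hat)

lemma tC_0_6_3_5_4_7: "\<not> (tile_at Q3 lam 0 = tile_at Q3 lam 6 \<and> tile_at Q3 lam 3 = tile_at Q3 lam 5 \<and> tile_at Q3 lam 4 = tile_at Q3 lam 7)"
  using teq_0_6 teq_3_5 teq_4_7 ne1 dsg by (metis (no_types) hat_hat)

lemma tC_1_2_4_7_0_3: "\<not> (tile_at Q3 lam 1 = tile_at Q3 lam 2 \<and> tile_at Q3 lam 4 = tile_at Q3 lam 7 \<and> tile_at Q3 lam 0 = tile_at Q3 lam 3)"
  using teq_1_2 teq_4_7 teq_0_3 ne1 dsg by (metis (no_types) hat_hat)

lemma tC_1_2_4_7_0_5: "\<not> (tile_at Q3 lam 1 = tile_at Q3 lam 2 \<and> tile_at Q3 lam 4 = tile_at Q3 lam 7 \<and> tile_at Q3 lam 0 = tile_at Q3 lam 5)"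
  using teq_1_2 teq_4_7 teq_0_5 ne3 dsg by (metis (no_types) hat_hat)

lemma tC_1_2_4_7_0_6: "\<not> (tile_at Q3 lam 1 = tile_at Q3 lam 2 \<and> tile_at Q3 lam 4 = tile_at Q3 lam 7 \<and> tile_at Q3 lam 0 = tile_at Q3 lam 6)"
  using teq_1_2 teq_4_7 teq_0_6 ne8 dsg by (metis (no_types) hat_hat)

lemma tC_1_2_4_7_3_5: "\<not> (tile_at Q3 lam 1 = tile_at Q3 lam 2 \<and> tile_at Q3 lam 4 = tile_at Q3 lam 7 \<and> tile_at Q3 lam 3 = tile_at Q3 lam 5)"
  using teq_1_2 teq_4_7 teq_3_5 ne42 dsg by (metis (no_types) hat_hat)

lemma tC_1_2_4_7_3_6: "\<not> (tile_at Q3 lam 1 = tile_at Q3 lam 2 \<and> tile_at Q3 lam 4 = tile_at Q3 lam 7 \<and> tile_at Q3 lam 3 = tile_at Q3 lam 6)"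
  using teq_1_2 teq_4_7 teq_3_6 ne36 dsg by (metis (no_types) hat_hat)

lemma tC_1_2_4_7_5_6: "\<not> (tile_at Q3 lam 1 = tile_at Q3 lam 2 \<and> tile_at Q3 lam 4 = tile_at Q3 lam 7 \<and> tile_at Q3 lam 5 = tile_at Q3 lam 6)"
  using teq_1_2 teq_4_7 teq_5_6 ne65 dsg by (metis (no_types) hat_hat)

lemma tC_1_4_2_7_0_3: "\<not> (tile_at Q3 lam 1 = tile_at Q3 lam 4 \<and> tile_at Q3 lam 2 = tile_at Q3 lam 7 \<and> tile_at Q3 lam 0 = tile_at Q3 lam 3)"
  using teq_1_4 teq_2_7 teq_0_3 ne1 dsg by (metis (no_types) hat_hat)

lemma tC_1_4_2_7_0_5: "\<not> (tile_at Q3 lam 1 = tile_at Q3 lam 4 \<and> tile_at Q3 lam 2 = tile_at Q3 lam 7 \<and> tile_at Q3 lam 0 = tile_at Q3 lam 5)"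
  using teq_1_4 teq_2_7 teq_0_5 ne3 dsg by (metis (no_types) hat_hat)

lemma tC_1_4_2_7_0_6: "\<not> (tile_at Q3 lam 1 = tile_at Q3 lam 4 \<and> tile_at Q3 lam 2 = tile_at Q3 lam 7 \<and> tile_at Q3 lam 0 = tile_at Q3 lam 6)"
  using teq_1_4 teq_2_7 teq_0_6 ne8 dsg by (metis (no_types) hat_hat)

lemma tC_1_4_2_7_3_5: "\<not> (tile_at Q3 lam 1 = tile_at Q3 lam 4 \<and> tile_at Q3 lam 2 = tile_at Q3 lam 7 \<and> tile_at Q3 lam 3 = tile_at Q3 lam 5)"
  using teq_1_4 teq_2_7 teq_3_5 ne39 dsg by (metis (no_types) hat_hat)

lemma tC_1_4_2_7_3_6: "\<not> (tile_at Q3 lam 1 = tile_at Q3 lam 4 \<and> tile_at Q3 lam 2 = tile_at Q3 lam 7 \<and> tile_at Q3 lam 3 = tile_at Q3 lam 6)"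
  using teq_1_4 teq_2_7 teq_3_6 ne36 dsg by (metis (no_types) hat_hat)

lemma tC_1_4_2_7_5_6: "\<not> (tile_at Q3 lam 1 = tile_at Q3 lam 4 \<and> tile_at Q3 lam 2 = tile_at Q3 lam 7 \<and> tile_at Q3 lam 5 = tile_at Q3 lam 6)"
  using teq_1_4 teq_2_7 teq_5_6 ne65 dsg by (metis (no_types) hat_hat)

lemma tC_1_7_2_4_0_3: "\<not> (tile_at Q3 lam 1 = tile_at Q3 lam 7 \<and> tile_at Q3 lam 2 = tile_at Q3 lam 4 \<and> tile_at Q3 lam 0 = tile_at Q3 lam 3)"
  using teq_1_7 teq_2_4 teq_0_3 ne1 dsg by (metis (no_types) hat_hat)

lemma tC_1_7_2_4_0_5: "\<not> (tile_at Q3 lam 1 = tile_at Q3 lam 7 \<and> tile_at Q3 lam 2 = tile_at Q3 lam 4 \<and> tile_at Q3 lam 0 = tile_at Q3 lam 5)"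
  using teq_1_7 teq_2_4 teq_0_5 ne1 dsg by (metis (no_types) hat_hat)

lemma tC_1_7_2_4_0_6: "\<not> (tile_at Q3 lam 1 = tile_at Q3 lam 7 \<and> tile_at Q3 lam 2 = tile_at Q3 lam 4 \<and> tile_at Q3 lam 0 = tile_at Q3 lam 6)"
  using teq_1_7 teq_2_4 teq_0_6 ne119 dsg by (metis (no_types) hat_hat)

lemma tC_1_7_2_4_3_5: "\<not> (tile_at Q3 lam 1 = tile_at Q3 lam 7 \<and> tile_at Q3 lam 2 = tile_at Q3 lam 4 \<and> tile_at Q3 lam 3 = tile_at Q3 lam 5)"
  using teq_1_7 teq_2_4 teq_3_5 ne140 dsg by (metis (no_types) hat_hat)

lemma tC_1_7_2_4_3_6: "\<not> (tile_at Q3 lam 1 = tile_at Q3 lam 7 \<and> tile_at Q3 lam 2 = tile_at Q3 lam 4 \<and> tile_at Q3 lam 3 = tile_at Q3 lam 6)"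
  using teq_1_7 teq_2_4 teq_3_6 ne1 dsg by (metis (no_types) hat_hat)

lemma tC_1_7_2_4_5_6: "\<not> (tile_at Q3 lam 1 = tile_at Q3 lam 7 \<and> tile_at Q3 lam 2 = tile_at Q3 lam 4 \<and> tile_at Q3 lam 5 = tile_at Q3 lam 6)"
  using teq_1_7 teq_2_4 teq_5_6 ne1 dsg by (metis (no_types) hat_hat)


lemma pot6: "6 \<le> card (pot_of Q3 lam)"
proof -
  let ?t = "tile_at Q3 lam"
  have img: "pot_of Q3 lam = {?t 0, ?t 3, ?t 5, ?t 6} \<union> {?t 1, ?t 2, ?t 4, ?t 7}"
    unfolding pot_of_def Q3_simps by (auto simp: less8 image_iff)
  have disj: "{?t 0, ?t 3, ?t 5, ?t 6} \<inter> {?t 1, ?t 2, ?t 4, ?t 7} = {}"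
    using tne_0_1 tne_0_2 tne_0_4 tne_0_7 tne_1_3 tne_1_5 tne_1_6 tne_2_3 tne_2_5 tne_2_6 tne_3_4 tne_3_7 tne_4_5 tne_4_6 tne_5_7 tne_6_7 tne_0_1[THEN not_sym] tne_0_2[THEN not_sym] tne_0_4[THEN not_sym] tne_0_7[THEN not_sym] tne_1_3[THEN not_sym] tne_1_5[THEN not_sym] tne_1_6[THEN not_sym] tne_2_3[THEN not_sym] tne_2_5[THEN not_sym] tne_2_6[THEN not_sym] tne_3_4[THEN not_sym] tne_3_7[THEN not_sym] tne_4_5[THEN not_sym] tne_4_6[THEN not_sym] tne_5_7[THEN not_sym] tne_6_7[THEN not_sym] by auto
  have cd: "card (pot_of Q3 lam) = card {?t 0, ?t 3, ?t 5, ?t 6} + card {?t 1, ?t 2, ?t 4, ?t 7}"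
    unfolding img by (rule card_Un_disjoint[OF _ _ disj]) simp_all
  note E = card4[of "?t 0" "?t 3" "?t 5" "?t 6", OF tB_0_3_5 tB_0_3_6 tB_0_5_6 tB_3_0_5 tB_3_0_6 tB_3_5_6 tB_5_0_3 tB_5_0_6 tB_5_3_6 tB_6_0_3 tB_6_0_5 tB_6_3_5]
  note O = card4[of "?t 1" "?t 2" "?t 4" "?t 7", OF tB_1_2_4 tB_1_2_7 tB_1_4_7 tB_2_1_4 tB_2_1_7 tB_2_4_7 tB_4_1_2 tB_4_1_7 tB_4_2_7 tB_7_1_2 tB_7_1_4 tB_7_2_4]
  note C = tC_0_3_5_6_1_2 tC_0_3_5_6_1_4 tC_0_3_5_6_1_7 tC_0_3_5_6_2_4 tC_0_3_5_6_2_7 tC_0_3_5_6_4_7 tC_0_5_3_6_1_2 tC_0_5_3_6_1_4 tC_0_5_3_6_1_7 tC_0_5_3_6_2_4 tC_0_5_3_6_2_7 tC_0_5_3_6_4_7 tC_0_6_3_5_1_2 tC_0_6_3_5_1_4 tC_0_6_3_5_1_7 tC_0_6_3_5_2_4 tC_0_6_3_5_2_7 tC_0_6_3_5_4_7 tC_1_2_4_7_0_3 tC_1_2_4_7_0_5 tC_1_2_4_7_0_6 tC_1_2_4_7_3_5 tC_1_2_4_7_3_6 tC_1_2_4_7_5_6 tC_1_4_2_7_0_3 tC_1_4_2_7_0_5 tC_1_4_2_7_0_6 tC_1_4_2_7_3_5 tC_1_4_2_7_3_6 tC_1_4_2_7_5_6 tC_1_7_2_4_0_3 tC_1_7_2_4_0_5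 tC_1_7_2_4_0_6 tC_1_7_2_4_3_5 tC_1_7_2_4_3_6 tC_1_7_2_4_5_6
  show ?thesis
  proof (cases "3 \<le> card {?t 0, ?t 3, ?t 5, ?t 6}")
    case True
    show ?thesis
    proof (cases "3 \<le> card {?t 1, ?t 2, ?t 4, ?t 7}")
      case True
      then show ?thesis using cd \<open>3 \<le> card {?t 0, ?t 3, ?t 5, ?t 6}\<close> by linarith
    next
      case False
      then have m: "(?t 1 = ?t 2 \<and> ?t 4 = ?t 7) \<or> (?t 1 = ?t 4 \<and> ?t 2 = ?t 7) \<or> (?t 1 = ?t 7 \<and> ?t 2 = ?t 4)"
        using O(1) by blast
      have "card {?t 0, ?t 3, ?t 5, ?t 6} = 4"
        using m
      proof (elim disjE conjE)
        assume "?t 1 = ?t 2" "?t 4 = ?t 7"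
        have n1: "?t 0 \<noteq> ?t 3" using tC_1_2_4_7_0_3 \<open>?t 1 = ?t 2\<close> \<open>?t 4 = ?t 7\<close> by blast
        have n2: "?t 0 \<noteq> ?t 5" using tC_1_2_4_7_0_5 \<open>?t 1 = ?t 2\<close> \<open>?t 4 = ?t 7\<close> by blast
        have n3: "?t 0 \<noteq> ?t 6" using tC_1_2_4_7_0_6 \<open>?t 1 = ?t 2\<close> \<open>?t 4 = ?t 7\<close> by blast
        have n4: "?t 3 \<noteq> ?t 5" using tC_1_2_4_7_3_5 \<open>?t 1 = ?t 2\<close> \<open>?t 4 = ?t 7\<close> by blast
        have n5: "?t 3 \<noteq> ?t 6" using tC_1_2_4_7_3_6 \<open>?t 1 = ?t 2\<close> \<open>?t 4 = ?t 7\<close> by blast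
        have n6: "?t 5 \<noteq> ?t 6" using tC_1_2_4_7_5_6 \<open>?t 1 = ?t 2\<close> \<open>?t 4 = ?t 7\<close> by blast
        show ?thesis using n1 n2 n3 n4 n5 n6 E(2) by blast
      next
        assume "?t 1 = ?t 4" "?t 2 = ?t 7"
        have n1: "?t 0 \<noteq> ?t 3" using tC_1_4_2_7_0_3 \<open>?t 1 = ?t 4\<close> \<open>?t 2 = ?t 7\<close> by blast
        have n2: "?t 0 \<noteq> ?t 5" using tC_1_4_2_7_0_5 \<open>?t 1 = ?t 4\<close> \<open>?t 2 = ?t 7\<close> by blast
        have n3: "?t 0 \<noteq> ?t 6" using tC_1_4_2_7_0_6 \<open>?t 1 = ?t 4\<close> \<open>?t 2 = ?t 7\<close> by blast
        have n4: "?t 3 \<noteq> ?t 5" using tC_1_4_2_7_3_5 \<open>?t 1 = ?t 4\<close> \<open>?t 2 = ?t 7\<close> by blast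
        have n5: "?t 3 \<noteq> ?t 6" using tC_1_4_2_7_3_6 \<open>?t 1 = ?t 4\<close> \<open>?t 2 = ?t 7\<close> by blast
        have n6: "?t 5 \<noteq> ?t 6" using tC_1_4_2_7_5_6 \<open>?t 1 = ?t 4\<close> \<open>?t 2 = ?t 7\<close> by blast
        show ?thesis using n1 n2 n3 n4 n5 n6 E(2) by blast
      next
        assume "?t 1 = ?t 7" "?t 2 = ?t 4"
        have n1: "?t 0 \<noteq> ?t 3" using tC_1_7_2_4_0_3 \<open>?t 1 = ?t 7\<close> \<open>?t 2 = ?t 4\<close> by blast
        have n2: "?t 0 \<noteq> ?t 5" using tC_1_7_2_4_0_5 \<open>?t 1 = ?t 7\<close> \<open>?t 2 = ?t 4\<close> by blast
        have n3: "?t 0 \<noteq> ?t 6" using tC_1_7_2_4_0_6 \<open>?t 1 = ?t 7\<close> \<open>?t 2 = ?t 4\<close> by blast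
        have n4: "?t 3 \<noteq> ?t 5" using tC_1_7_2_4_3_5 \<open>?t 1 = ?t 7\<close> \<open>?t 2 = ?t 4\<close> by blast
        have n5: "?t 3 \<noteq> ?t 6" using tC_1_7_2_4_3_6 \<open>?t 1 = ?t 7\<close> \<open>?t 2 = ?t 4\<close> by blast
        have n6: "?t 5 \<noteq> ?t 6" using tC_1_7_2_4_5_6 \<open>?t 1 = ?t 7\<close> \<open>?t 2 = ?t 4\<close> by blast
        show ?thesis using n1 n2 n3 n4 n5 n6 E(2) by blast
      qed
      then show ?thesis using cd O(3) by linarith
    qed
  next
    case False
    then have m: "(?t 0 = ?t 3 \<and> ?t 5 = ?t 6) \<or> (?t 0 = ?t 5 \<and> ?t 3 = ?t 6) \<or> (?t 0 = ?t 6 \<and> ?t 3 = ?t 5)"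
      using E(1) by blast
    have "card {?t 1, ?t 2, ?t 4, ?t 7} = 4"
      using m
    proof (elim disjE conjE)
      assume "?t 0 = ?t 3" "?t 5 = ?t 6"
      have n1: "?t 1 \<noteq> ?t 2" using tC_0_3_5_6_1_2 \<open>?t 0 = ?t 3\<close> \<open>?t 5 = ?t 6\<close> by blast
      have n2: "?t 1 \<noteq> ?t 4" using tC_0_3_5_6_1_4 \<open>?t 0 = ?t 3\<close> \<open>?t 5 = ?t 6\<close> by blast
      have n3: "?t 1 \<noteq> ?t 7" using tC_0_3_5_6_1_7 \<open>?t 0 = ?t 3\<close> \<open>?t 5 = ?t 6\<close> by blast
      have n4: "?t 2 \<noteq> ?t 4" using tC_0_3_5_6_2_4 \<open>?t 0 = ?t 3\<close> \<open>?t 5 = ?t 6\<close> by blast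
      have n5: "?t 2 \<noteq> ?t 7" using tC_0_3_5_6_2_7 \<open>?t 0 = ?t 3\<close> \<open>?t 5 = ?t 6\<close> by blast
      have n6: "?t 4 \<noteq> ?t 7" using tC_0_3_5_6_4_7 \<open>?t 0 = ?t 3\<close> \<open>?t 5 = ?t 6\<close> by blast
      show ?thesis using n1 n2 n3 n4 n5 n6 O(2) by blast
    next
      assume "?t 0 = ?t 5" "?t 3 = ?t 6"
      have n1: "?t 1 \<noteq> ?t 2" using tC_0_5_3_6_1_2 \<open>?t 0 = ?t 5\<close> \<open>?t 3 = ?t 6\<close> by blast
      have n2: "?t 1 \<noteq> ?t 4" using tC_0_5_3_6_1_4 \<open>?t 0 = ?t 5\<close> \<open>?t 3 = ?t 6\<close> by blast
      have n3: "?t 1 \<noteq> ?t 7" using tC_0_5_3_6_1_7 \<open>?t 0 = ?t 5\<close> \<open>?t 3 = ?t 6\<close> by blast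
      have n4: "?t 2 \<noteq> ?t 4" using tC_0_5_3_6_2_4 \<open>?t 0 = ?t 5\<close> \<open>?t 3 = ?t 6\<close> by blast
      have n5: "?t 2 \<noteq> ?t 7" using tC_0_5_3_6_2_7 \<open>?t 0 = ?t 5\<close> \<open>?t 3 = ?t 6\<close> by blast
      have n6: "?t 4 \<noteq> ?t 7" using tC_0_5_3_6_4_7 \<open>?t 0 = ?t 5\<close> \<open>?t 3 = ?t 6\<close> by blast
      show ?thesis using n1 n2 n3 n4 n5 n6 O(2) by blast
    next
      assume "?t 0 = ?t 6" "?t 3 = ?t 5"
      have n1: "?t 1 \<noteq> ?t 2" using tC_0_6_3_5_1_2 \<open>?t 0 = ?t 6\<close> \<open>?t 3 = ?t 5\<close> by blast
      have n2: "?t 1 \<noteq> ?t 4" using tC_0_6_3_5_1_4 \<open>?t 0 = ?t 6\<close> \<open>?t 3 = ?t 5\<close> by blast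
      have n3: "?t 1 \<noteq> ?t 7" using tC_0_6_3_5_1_7 \<open>?t 0 = ?t 6\<close> \<open>?t 3 = ?t 5\<close> by blast
      have n4: "?t 2 \<noteq> ?t 4" using tC_0_6_3_5_2_4 \<open>?t 0 = ?t 6\<close> \<open>?t 3 = ?t 5\<close> by blast
      have n5: "?t 2 \<noteq> ?t 7" using tC_0_6_3_5_2_7 \<open>?t 0 = ?t 6\<close> \<open>?t 3 = ?t 5\<close> by blast
      have n6: "?t 4 \<noteq> ?t 7" using tC_0_6_3_5_4_7 \<open>?t 0 = ?t 6\<close> \<open>?t 3 = ?t 5\<close> by blast
      show ?thesis using n1 n2 n3 n4 n5 n6 O(2) by blast
    qed
    then show ?thesis using cd E(3) by linarith
  qed
qed

end

definition lab :: "(nat \<Rightarrow> bool \<Rightarrow> cend) \<Rightarrow> nat \<times> bool \<Rightarrow> cend" where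
  "lab lam h = lam (fst h) (snd h)"

lemma lab_case: "(\<lambda>(e, b). lam e b) = lab lam"
  by (auto simp: lab_def)

lemma finite_HS: "finite (edges G) \<Longrightarrow> finite (HS G v)"
  by (rule finite_subset[of _ "edges G \<times> UNIV"]) (auto simp: HS_def)

lemma count_tile:
  assumes "finite (edges G)"
  shows "count (tile_at G lam v) x = card {h \<in> HS G v. lab lam h = x}"
proof -
  have fin: "finite (HS G v)" using finite_HS[OF assms] .
  have "count (tile_at G lam v) x = (\<Sum>y\<in>lab lam -` {x} \<inter> HS G v. count (mset_set (HS G v)) y)"
    unfolding tile_at_HS lab_case count_image_mset using fin by simp
  also have "\<dots> = (\<Sum>y\<in>lab lam -` {x} \<inter> HS G v. 1)"
    using fin by (intro sum.cong) auto
  also have "\<dots> = card {h \<in> HS G v. lab lam h = x}"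
    by (simp add: Int_commute Int_def vimage_def conj_commute)
  finally show ?thesis .
qed

lemma mem_tile:
  assumes "finite (edges G)"
  shows "x \<in># tile_at G lam v \<longleftrightarrow> (\<exists>h\<in>HS G v. lab lam h = x)"
  unfolding tile_at_HS lab_case using finite_HS[OF assms] by auto

lemma sum_HS:
  assumes "wf_graph G"
  shows "(\<Sum>v\<in>verts G. card {h \<in> HS G v. Q h}) = card {h \<in> edges G \<times> UNIV. Q h}"
proof -
  have fE: "finite (edges G)" using assms by (simp add: wf_graph_def)
  have fV: "finite (verts G)" using assms by (simp add: wf_graph_def)
  have U: "{h \<in> edges G \<times> UNIV. Q h} = (\<Union>v\<in>verts G. {h \<in> HS G v. Q h})"
    using assms by (auto simp: HS_def wf_graph_def)
  have "card (\<Union>v\<in>verts G. {h \<in> HS G v. Q h}) = (\<Sum>v\<in>verts G. card {h \<in> HS G v. Q h})"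
    by (rule card_UN_disjoint) (use fV finite_HS[OF fE] in \<open>auto simp: HS_def\<close>)
  then show ?thesis using U by simp
qed

lemma flip_card:
  assumes "assembly_design G lam"
  shows "card {h \<in> edges G \<times> UNIV. lab lam h = x} = card {h \<in> edges G \<times> UNIV. lab lam h = hat x}"
proof -
  have d0: "lab lam (e, \<not> b) = hat (lab lam (e, b))" if "e \<in> edges G" for e b
    using assms that unfolding assembly_design_def lab_def by (cases b) auto
  have d: "lab lam (fst h, \<not> snd h) = hat (lab lam h)" if "fst h \<in> edges G" for h
    using d0[of "fst h" "snd h"] that by simp
  let ?fl = "\<lambda>h::nat\<times>bool. (fst h, \<not> snd h)"
  have "bij_betw ?fl {h \<in> edges G \<times> UNIV. lab lam h = x} {h \<in> edges G \<times> UNIV. lab lam h = hat x}"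
  proof (rule bij_betw_byWitness[where f' = ?fl])
    show "\<forall>a\<in>{h \<in> edges G \<times> UNIV. lab lam h = x}. ?fl (?fl a) = a" by simp
    show "\<forall>a'\<in>{h \<in> edges G \<times> UNIV. lab lam h = hat x}. ?fl (?fl a') = a'" by simp
    show "?fl ` {h \<in> edges G \<times> UNIV. lab lam h = x} \<subseteq> {h \<in> edges G \<times> UNIV. lab lam h = hat x}"
      using d by auto
    show "?fl ` {h \<in> edges G \<times> UNIV. lab lam h = hat x} \<subseteq> {h \<in> edges G \<times> UNIV. lab lam h = x}"
      using d by force
  qed
  then show ?thesis by (rule bij_betw_same_card)
qed

lemma balance:
  assumes "wf_graph G" "assembly_design G lam"
  shows "(\<Sum>v\<in>verts G. count (tile_at G lam v) x) = (\<Sum>v\<in>verts G. count (tile_at G lam v) (hat x))"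
proof -
  have fE: "finite (edges G)" using assms by (simp add: wf_graph_def)
  show ?thesis
    unfolding count_tile[OF fE] sum_HS[OF assms(1)] flip_card[OF assms(2), of x] ..
qed

lemma fiber_sum:
  assumes "finite V" "finite P" "\<And>v. v \<in> V \<Longrightarrow> t v \<in> P"
  shows "(\<Sum>v\<in>V. f (t v)) = (\<Sum>T\<in>P. card {v \<in> V. t v = T} * f T)"
proof -
  have "(\<Sum>v\<in>V. f (t v)) = (\<Sum>T\<in>P. \<Sum>v\<in>{v \<in> V. t v = T}. f (t v))"
    by (rule sum.group[symmetric]) (use assms in auto)
  also have "\<dots> = (\<Sum>T\<in>P. card {v \<in> V. t v = T} * f T)"
    by (intro sum.cong) auto
  finally show ?thesis .
qed

lemma card_fibers:
  assumes "finite V" "finite P" "\<And>v. v \<in> V \<Longrightarrow> t v \<in> P"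
  shows "card V = (\<Sum>T\<in>P. card {v \<in> V. t v = T})"
  using fiber_sum[OF assms, where f = "\<lambda>_. 1"] by simp

lemma size_tile:
  assumes "finite (edges G)"
  shows "size (tile_at G lam v) = card (HS G v)"
  unfolding tile_at_HS using finite_HS[OF assms] by simp

definition tA :: tile where "tA = {#(0,False),(3,False),(3,False)#}"
definition tB :: tile where "tB = {#(0,True),(4,False),(4,False)#}"
definition tC :: tile where "tC = {#(1,False),(3,True),(5,True)#}"
definition tD :: tile where "tD = {#(1,True),(4,True),(6,True)#}"
definition tE :: tile where "tE = {#(2,False),(5,False),(5,False)#}"
definition tF :: tile where "tF = {#(2,True),(6,False),(6,False)#}"
definition P6 :: "tile set" where "P6 = {tA, tB, tC, tD, tE, tF}"

lemmas tdefs = tA_def tB_def tC_def tD_def tE_def tF_def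

lemma tiles_distinct:
  "tA \<noteq> tB" "tA \<noteq> tC" "tA \<noteq> tD" "tA \<noteq> tE" "tA \<noteq> tF"
  "tB \<noteq> tC" "tB \<noteq> tD" "tB \<noteq> tE" "tB \<noteq> tF"
  "tC \<noteq> tD" "tC \<noteq> tE" "tC \<noteq> tF"
  "tD \<noteq> tE" "tD \<noteq> tF" "tE \<noteq> tF"
  by (simp_all add: tdefs mset3_eq)

lemma card_P6: "card P6 = 6"
  using tiles_distinct by (simp add: P6_def)

lemma is_pot_P6: "is_pot P6"
  unfolding is_pot_def P6_def by (auto simp: tdefs hat_def)

definition tlist :: "cend list" where
  "tlist = [(0,False),(1,False),(1,False),(2,False),(3,False),(4,False),(5,True),(6,True),(3,False),(4,False),(5,True),(6,True)]"

definition lam0 :: "nat \<Rightarrow> bool \<Rightarrow> cend" where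
  "lam0 e b = (if b then tlist ! e else hat (tlist ! e))"

lemma HS_Q3_Suc0: "HS Q3 (Suc 0) = {(0,False),(5,True),(9,True)}"
  using HS_Q3(2) by simp

lemma realizes_P6_Q3: "realizes P6 Q3"
  unfolding realizes_def
proof (intro exI conjI)
  show "assembly_design Q3 lam0" by (simp add: assembly_design_def lam0_def)
  show "pot_of Q3 lam0 \<subseteq> P6"
    unfolding pot_of_def
    by (auto simp: less8 tile_at_HS HS_Q3 HS_Q3_Suc0 lam0_def tlist_def hat_def P6_def tdefs)
qed


lemma sumP6: "(\<Sum>T\<in>P6. g T) = g tA + g tB + g tC + g tD + g tE + g tF"
  using tiles_distinct by (simp add: P6_def add.assoc)

lemma lam_flip: "assembly_design G lam \<Longrightarrow> e \<in> edges G \<Longrightarrow> lam e (\<not> b) = hat (lam e b)"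
  unfolding assembly_design_def by (cases b) auto

locale ub =
  fixes H lam
  assumes wf: "wf_graph H" and des: "assembly_design H lam" and pot: "pot_of H lam \<subseteq> P6"
begin

lemma fE: "finite (edges H)" using wf by (simp add: wf_graph_def)
lemma fV: "finite (verts H)" using wf by (simp add: wf_graph_def)
lemma Vne: "verts H \<noteq> {}" using wf by (simp add: wf_graph_def)
lemma endp_V: "e \<in> edges H \<Longrightarrow> endp H e b \<in> verts H" using wf by (simp add: wf_graph_def)

lemma tauP: "v \<in> verts H \<Longrightarrow> tile_at H lam v \<in> P6"
  using pot by (auto simp: pot_of_def)

definition n :: "tile \<Rightarrow> nat" where "n T = card {v \<in> verts H. tile_at H lam v = T}"

lemma bal: "n tA * count tA x + n tB * count tB x + n tC * count tC x + n tD * count tD x + n tE * count tE x + n tF * count tF x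
  = n tA * count tA (hat x) + n tB * count tB (hat x) + n tC * count tC (hat x) + n tD * count tD (hat x) + n tE * count tE (hat x) + n tF * count tF (hat x)"
proof -
  have "(\<Sum>v\<in>verts H. count (tile_at H lam v) x) = (\<Sum>v\<in>verts H. count (tile_at H lam v) (hat x))"
    by (rule balance[OF wf des])
  moreover have "(\<Sum>v\<in>verts H. count (tile_at H lam v) y) = (\<Sum>T\<in>P6. n T * count T y)" for y
    unfolding n_def by (rule fiber_sum[OF fV _ tauP]) (simp add: P6_def)
  ultimately show ?thesis unfolding sumP6 by simp
qed

lemma cardV: "card (verts H) = n tA + n tB + n tC + n tD + n tE + n tF"
proof -
  have "card (verts H) = (\<Sum>T\<in>P6. n T)"
    unfolding n_def by (rule card_fibers[OF fV _ tauP]) (simp add: P6_def)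
  then show ?thesis using sumP6[of n] by simp
qed

lemma n_eqs: "n tB = n tA" "n tC = 2 * n tA" "n tD = 2 * n tA" "n tE = n tA" "n tF = n tA"
proof -
  have e0: "n tA = n tB" using bal[of "(0,False)"] by (simp add: tdefs hat_def)
  have e1: "n tC = n tD" using bal[of "(1,False)"] by (simp add: tdefs hat_def)
  have e2: "n tE = n tF" using bal[of "(2,False)"] by (simp add: tdefs hat_def)
  have e3: "2 * n tA = n tC" using bal[of "(3,False)"] by (simp add: tdefs hat_def)
  have e5: "2 * n tE = n tC" using bal[of "(5,False)"] by (simp add: tdefs hat_def)
  show "n tB = n tA" "n tC = 2 * n tA" "n tD = 2 * n tA" "n tE = n tA" "n tF = n tA"
    using e0 e1 e2 e3 e5 by linarith+
qed

lemma card8: "card (verts H) = 8 * n tA"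
  using cardV n_eqs by simp

lemma ge8: "8 \<le> card (verts H)"
proof -
  have "0 < card (verts H)" using fV Vne by (simp add: card_gt_0_iff)
  then show ?thesis using card8 by simp
qed

end

definition edge_betw :: "mgraph \<Rightarrow> nat \<Rightarrow> nat \<Rightarrow> nat \<Rightarrow> bool" where
  "edge_betw H e u v \<longleftrightarrow> e \<in> edges H \<and> {#endp H e True, endp H e False#} = {#u, v#}"

lemma edge_betw_sym: "edge_betw H e u v \<Longrightarrow> edge_betw H e v u"
  unfolding edge_betw_def by (simp add: add_mset_commute)

context ub
begin

lemma nbr:
  assumes "v \<in> verts H" "x \<in># tile_at H lam v"
  shows "\<exists>e b. e \<in> edges H \<and> endp H e b = v \<and> lam e b = x \<and> hat x \<in># tile_at H lam (endp H e (\<not> b))"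
proof -
  obtain h where h: "h \<in> HS H v" "lab lam h = x" using assms(2) mem_tile[OF fE] by blast
  obtain e b where eb: "h = (e, b)" by (cases h)
  have e: "e \<in> edges H" "endp H e b = v" "lam e b = x" using h eb by (auto simp: HS_def lab_def)
  have "(e, \<not> b) \<in> HS H (endp H e (\<not> b))" using e by (simp add: HS_def)
  moreover have "lab lam (e, \<not> b) = hat x" using lam_flip[OF des e(1)] e by (simp add: lab_def)
  ultimately have "hat x \<in># tile_at H lam (endp H e (\<not> b))" using mem_tile[OF fE] by blast
  then show ?thesis using e by blast
qed

lemma uniq:
  assumes "count (tile_at H lam v) x = 1" "e \<in> edges H" "e' \<in> edges H"
    "endp H e b = v" "endp H e' b' = v" "lam e b = x" "lam e' b' = x"
  shows "e = e' \<and> b = b'"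
proof -
  have "card {h \<in> HS H v. lab lam h = x} = 1" using assms(1) count_tile[OF fE] by simp
  then obtain h0 where h0: "{h \<in> HS H v. lab lam h = x} = {h0}" by (rule card_1_singletonE)
  have "(e, b) \<in> {h \<in> HS H v. lab lam h = x}" "(e', b') \<in> {h \<in> HS H v. lab lam h = x}"
    using assms by (auto simp: HS_def lab_def)
  then show ?thesis using h0 by auto
qed

lemma edge_mset: "e \<in> edges H \<Longrightarrow> {#endp H e True, endp H e False#} = {#endp H e b, endp H e (\<not> b)#}"
  by (cases b) (auto simp: add_mset_commute)

lemma reach:
  assumes "v \<in> verts H" "x \<in># tile_at H lam v" "\<And>w. w \<in> verts H \<Longrightarrow> hat x \<in># tile_at H lam w \<Longrightarrow> w = u"
  shows "\<exists>e. edge_betw H e v u"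
proof -
  obtain e b where e: "e \<in> edges H" "endp H e b = v" "lam e b = x" "hat x \<in># tile_at H lam (endp H e (\<not> b))"
    using nbr[OF assms(1,2)] by blast
  have "endp H e (\<not> b) = u" using assms(3)[OF endp_V[OF e(1)] e(4)] .
  then have "edge_betw H e v u" using edge_mset[OF e(1), of b] e by (simp add: edge_betw_def)
  then show ?thesis by blast
qed

lemma id_tile:
  assumes "w \<in> verts H"
  shows "(0,True) \<in># tile_at H lam w \<Longrightarrow> tile_at H lam w = tB"
    and "(1,True) \<in># tile_at H lam w \<Longrightarrow> tile_at H lam w = tD"
    and "(2,True) \<in># tile_at H lam w \<Longrightarrow> tile_at H lam w = tF"
    and "(3,False) \<in># tile_at H lam w \<Longrightarrow> tile_at H lam w = tA"
    and "(4,False) \<in># tile_at H lam w \<Longrightarrow> tile_at H lam w = tB"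
    and "(5,False) \<in># tile_at H lam w \<Longrightarrow> tile_at H lam w = tE"
    and "(6,False) \<in># tile_at H lam w \<Longrightarrow> tile_at H lam w = tF"
  using tauP[OF assms] by (auto simp: P6_def tdefs)

lemma size_tau: "v \<in> verts H \<Longrightarrow> size (tile_at H lam v) = 3"
  using tauP[of v] by (auto simp: P6_def tdefs)

lemma card_E:
  assumes "card (verts H) = 8"
  shows "card (edges H) = 12"
proof -
  have "(\<Sum>v\<in>verts H. card {h \<in> HS H v. True}) = card {h \<in> edges H \<times> (UNIV::bool set). True}"
    by (rule sum_HS[OF wf])
  moreover have "(\<Sum>v\<in>verts H. card {h \<in> HS H v. True}) = (\<Sum>v\<in>verts H. 3)"
    using size_tau size_tile[OF fE] by (intro sum.cong) auto
  moreover have "card {h \<in> edges H \<times> (UNIV::bool set). True} = 2 * card (edges H)"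
    using fE by (simp add: card_cartesian_product)
  ultimately show ?thesis using assms by simp
qed

end


context ub
begin

lemma fiber1:
  assumes "n T = 1"
  obtains u where "u \<in> verts H" "tile_at H lam u = T" "\<And>w. w \<in> verts H \<Longrightarrow> tile_at H lam w = T \<Longrightarrow> w = u"
proof -
  have "card {v \<in> verts H. tile_at H lam v = T} = 1" using assms by (simp add: n_def)
  then obtain u where "{v \<in> verts H. tile_at H lam v = T} = {u}" by (rule card_1_singletonE)
  then show ?thesis using that by blast
qed

lemma fiber2:
  assumes "n T = 2"
  obtains u u' where "u \<in> verts H" "tile_at H lam u = T" "u' \<in> verts H" "tile_at H lam u' = T" "u \<noteq> u'"
    "\<And>w. w \<in> verts H \<Longrightarrow> tile_at H lam w = T \<Longrightarrow> w = u \<or> w = u'"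
proof -
  have "card {v \<in> verts H. tile_at H lam v = T} = 2" using assms by (simp add: n_def)
  then obtain u u' where "{v \<in> verts H. tile_at H lam v = T} = {u, u'}" "u \<noteq> u'"
    unfolding card_2_iff by blast
  then show ?thesis using that by blast
qed

lemma iso8:
  assumes c8: "card (verts H) = 8"
  shows "graph_iso Q3 H"
proof -
  have nA: "n tA = 1" using card8 c8 by simp
  then have nB: "n tB = 1" and nC: "n tC = 2" and nD: "n tD = 2" and nE: "n tE = 1" and nF: "n tF = 1"
    using n_eqs by simp_all
  obtain a0 where a0: "a0 \<in> verts H" "tile_at H lam a0 = tA" "\<And>w. w \<in> verts H \<Longrightarrow> tile_at H lam w = tA \<Longrightarrow> w = a0"
    using fiber1[OF nA] by blast
  obtain b0 where b0: "b0 \<in> verts H" "tile_at H lam b0 = tB" "\<And>w. w \<in> verts H \<Longrightarrow> tile_at H lam w = tB \<Longrightarrow> w = b0"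
    using fiber1[OF nB] by blast
  obtain e0 where e0: "e0 \<in> verts H" "tile_at H lam e0 = tE" "\<And>w. w \<in> verts H \<Longrightarrow> tile_at H lam w = tE \<Longrightarrow> w = e0"
    using fiber1[OF nE] by blast
  obtain f0 where f0: "f0 \<in> verts H" "tile_at H lam f0 = tF" "\<And>w. w \<in> verts H \<Longrightarrow> tile_at H lam w = tF \<Longrightarrow> w = f0"
    using fiber1[OF nF] by blast
  obtain c1 c2 where c: "c1 \<in> verts H" "tile_at H lam c1 = tC" "c2 \<in> verts H" "tile_at H lam c2 = tC" "c1 \<noteq> c2"
    using fiber2[OF nC] by blast
  obtain dd1 dd2 where dd: "dd1 \<in> verts H" "tile_at H lam dd1 = tD" "dd2 \<in> verts H" "tile_at H lam dd2 = tD" "dd1 \<noteq> dd2"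
    "\<And>w. w \<in> verts H \<Longrightarrow> tile_at H lam w = tD \<Longrightarrow> w = dd1 \<or> w = dd2"
    using fiber2[OF nD] by blast
  have c1_1: "(1,False) \<in># tile_at H lam c1" using c by (simp add: tC_def)
  obtain ea ba where ea: "ea \<in> edges H" "endp H ea ba = c1" "lam ea ba = (1,False)"
    "hat (1,False) \<in># tile_at H lam (endp H ea (\<not> ba))"
    using nbr[OF c(1) c1_1] by blast
  define d1 where "d1 = endp H ea (\<not> ba)"
  have d1V: "d1 \<in> verts H" using endp_V[OF ea(1)] by (simp add: d1_def)
  have d1t: "tile_at H lam d1 = tD" using id_tile(2)[OF d1V] ea(4) by (simp add: d1_def hat_def)
  define d2 where "d2 = (if d1 = dd1 then dd2 else dd1)"
  have d2V: "d2 \<in> verts H" and d2t: "tile_at H lam d2 = tD" and d12: "d1 \<noteq> d2"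
    and dfib: "\<And>w. w \<in> verts H \<Longrightarrow> tile_at H lam w = tD \<Longrightarrow> w = d1 \<or> w = d2"
    using dd d1V d1t unfolding d2_def by (auto split: if_splits)
  have E1: "edge_betw H ea c1 d1"
    using edge_mset[OF ea(1), of ba] ea by (simp add: edge_betw_def d1_def)
  have c2_1: "(1,False) \<in># tile_at H lam c2" using c by (simp add: tC_def)
  obtain eb bb where eb: "eb \<in> edges H" "endp H eb bb = c2" "lam eb bb = (1,False)"
    "hat (1,False) \<in># tile_at H lam (endp H eb (\<not> bb))"
    using nbr[OF c(3) c2_1] by blast
  have wV: "endp H eb (\<not> bb) \<in> verts H" using endp_V[OF eb(1)] .
  have wt: "tile_at H lam (endp H eb (\<not> bb)) = tD" using id_tile(2)[OF wV] eb(4) by (simp add: hat_def)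
  have "endp H eb (\<not> bb) \<noteq> d1"
  proof
    assume w1: "endp H eb (\<not> bb) = d1"
    have cnt: "count (tile_at H lam d1) (1,True) = 1" using d1t by (simp add: tD_def)
    have "lam ea (\<not> ba) = (1,True)" "lam eb (\<not> bb) = (1,True)"
      using lam_flip[OF des ea(1)] lam_flip[OF des eb(1)] ea(3) eb(3) by (simp_all add: hat_def)
    moreover have "endp H ea (\<not> ba) = d1" "endp H eb (\<not> bb) = d1" using w1 d1_def by simp_all
    ultimately have "ea = eb \<and> (\<not> ba) = (\<not> bb)"
      using uniq[OF cnt ea(1) eb(1), of "\<not> ba" "\<not> bb"] by blast
    then show False using ea(2) eb(2) c(5) by auto
  qed
  then have w2: "endp H eb (\<not> bb) = d2" using dfib[OF wV wt] by blast
  have E2: "edge_betw H eb c2 d2"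
    using edge_mset[OF eb(1), of bb] eb w2 by (simp add: edge_betw_def)
  have toA: "\<And>w. w \<in> verts H \<Longrightarrow> hat (3,True) \<in># tile_at H lam w \<Longrightarrow> w = a0"
    using a0(3) id_tile(4) by (simp add: hat_def)
  have toB0: "\<And>w. w \<in> verts H \<Longrightarrow> hat (0,False) \<in># tile_at H lam w \<Longrightarrow> w = b0"
    using b0(3) id_tile(1) by (simp add: hat_def)
  have toB: "\<And>w. w \<in> verts H \<Longrightarrow> hat (4,True) \<in># tile_at H lam w \<Longrightarrow> w = b0"
    using b0(3) id_tile(5) by (simp add: hat_def)
  have toE: "\<And>w. w \<in> verts H \<Longrightarrow> hat (5,True) \<in># tile_at H lam w \<Longrightarrow> w = e0"
    using e0(3) id_tile(6) by (simp add: hat_def)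
  have toF2: "\<And>w. w \<in> verts H \<Longrightarrow> hat (2,False) \<in># tile_at H lam w \<Longrightarrow> w = f0"
    using f0(3) id_tile(3) by (simp add: hat_def)
  have toF: "\<And>w. w \<in> verts H \<Longrightarrow> hat (6,True) \<in># tile_at H lam w \<Longrightarrow> w = f0"
    using f0(3) id_tile(7) by (simp add: hat_def)
  have E0: "\<exists>e. edge_betw H e a0 b0"
  proof (rule reach[OF a0(1) _ toB0])
    show "(0,False) \<in># tile_at H lam a0" by (simp add: a0(2) tA_def)
  qed
  have E3: "\<exists>e. edge_betw H e e0 f0"
  proof (rule reach[OF e0(1) _ toF2])
    show "(2,False) \<in># tile_at H lam e0" by (simp add: e0(2) tE_def)
  qed
  have E4: "\<exists>e. edge_betw H e c1 a0"
  proof (rule reach[OF c(1) _ toA])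
    show "(3,True) \<in># tile_at H lam c1" by (simp add: c(2) c(4) tC_def)
  qed
  have E8: "\<exists>e. edge_betw H e c2 a0"
  proof (rule reach[OF c(3) _ toA])
    show "(3,True) \<in># tile_at H lam c2" by (simp add: c(2) c(4) tC_def)
  qed
  have E5: "\<exists>e. edge_betw H e d1 b0"
  proof (rule reach[OF d1V _ toB])
    show "(4,True) \<in># tile_at H lam d1" by (simp add: d1t tD_def)
  qed
  have E9: "\<exists>e. edge_betw H e d2 b0"
  proof (rule reach[OF d2V _ toB])
    show "(4,True) \<in># tile_at H lam d2" by (simp add: d2t tD_def)
  qed
  have E6: "\<exists>e. edge_betw H e c2 e0"
  proof (rule reach[OF c(3) _ toE])
    show "(5,True) \<in># tile_at H lam c2" by (simp add: c(2) c(4) tC_def)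
  qed
  have E10: "\<exists>e. edge_betw H e c1 e0"
  proof (rule reach[OF c(1) _ toE])
    show "(5,True) \<in># tile_at H lam c1" by (simp add: c(2) c(4) tC_def)
  qed
  have E7: "\<exists>e. edge_betw H e d2 f0"
  proof (rule reach[OF d2V _ toF])
    show "(6,True) \<in># tile_at H lam d2" by (simp add: d2t tD_def)
  qed
  have E11: "\<exists>e. edge_betw H e d1 f0"
  proof (rule reach[OF d1V _ toF])
    show "(6,True) \<in># tile_at H lam d1" by (simp add: d1t tD_def)
  qed
  have S4: "\<exists>e. edge_betw H e a0 c1" using E4 edge_betw_sym by blast
  have S8: "\<exists>e. edge_betw H e a0 c2" using E8 edge_betw_sym by blast
  have S5: "\<exists>e. edge_betw H e b0 d1" using E5 edge_betw_sym by blast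
  have S9: "\<exists>e. edge_betw H e b0 d2" using E9 edge_betw_sym by blast
  define fl where "fl = [a0, b0, c1, d1, c2, d2, e0, f0]"
  define f where "f = (\<lambda>i. fl ! i)"
  have ex: "\<exists>e. edge_betw H e (f (endp Q3 i True)) (f (endp Q3 i False))" if "i < 12" for i
    using that E0 E1 E2 E3 S4 S5 E6 E7 S8 S9 E10 E11
    unfolding less12 f_def fl_def by (auto intro: edge_betw_sym)
  define g where "g = (\<lambda>i. SOME e. edge_betw H e (f (endp Q3 i True)) (f (endp Q3 i False)))"
  have gp: "edge_betw H (g i) (f (endp Q3 i True)) (f (endp Q3 i False))" if "i < 12" for i
    unfolding g_def by (rule someI_ex[OF ex[OF that]])
  have dist: "distinct fl"
    using a0(2) b0(2) c(2) c(4) c(5) d1t d2t d12 e0(2) f0(2) tiles_distinct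
    unfolding fl_def by auto
  have injf: "inj_on f {0..<8}"
    unfolding f_def by (rule inj_on_nth[OF dist]) (simp add: fl_def)
  have fV: "f ` {0..<8} \<subseteq> verts H"
    using a0(1) b0(1) c(1) c(3) d1V d2V e0(1) f0(1) by (auto simp: f_def fl_def less8)
  have fimg: "f ` {0..<8} = verts H"
    by (rule card_subset_eq[OF ub.fV[OF ub_axioms] fV]) (simp add: card_image[OF injf] c8)
  have bf: "bij_betw f {0..<8} (verts H)" using injf fimg by (simp add: bij_betw_def)
  have injg: "inj_on g {0..<12}"
  proof (rule inj_onI)
    fix i j assume i: "i \<in> {0..<12}" and j: "j \<in> {0..<12}" and gij: "g i = g j"
    have "{#f (endp Q3 i True), f (endp Q3 i False)#} = {#f (endp Q3 j True), f (endp Q3 j False)#}"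
      using gp[of i] gp[of j] i j gij by (simp add: edge_betw_def)
    then have "{# endp Q3 i True, endp Q3 i False #} = {# endp Q3 j True, endp Q3 j False #}"
      unfolding mset2_eq using injf Q3_endp_in i j unfolding inj_on_def
      by (metis atLeastLessThan_iff zero_le)
    then show "i = j" using Q3_nopar[of i j] i j by auto
  qed
  have gE: "g ` {0..<12} \<subseteq> edges H" using gp by (auto simp: edge_betw_def)
  have gimg: "g ` {0..<12} = edges H"
    by (rule card_subset_eq[OF fE gE]) (simp add: card_image[OF injg] card_E[OF c8])
  have bg: "bij_betw g {0..<12} (edges H)" using injg gimg by (simp add: bij_betw_def)
  show ?thesis
    unfolding graph_iso_def
  proof (intro exI conjI)
    show "bij_betw f (verts Q3) (verts H)" using bf by simp
    show "bij_betw g (edges Q3) (edges H)" using bg by simp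
    show "\<forall>e\<in>edges Q3. {#f (endp Q3 e True), f (endp Q3 e False)#} = {#endp H (g e) True, endp H (g e) False#}"
      using gp by (simp add: edge_betw_def)
  qed
qed

end

lemma realizes_S3_P6: "realizes_S3 P6 Q3"
  unfolding realizes_S3_def
proof (intro conjI allI impI)
  show "realizes P6 Q3" by (rule realizes_P6_Q3)
next
  fix H assume h: "wf_graph H \<and> realizes P6 H"
  then obtain lam where "assembly_design H lam" "pot_of H lam \<subseteq> P6" unfolding realizes_def by blast
  then interpret ub H lam using h by unfold_locales simp_all
  show "card (verts Q3) \<le> card (verts H)" using ge8 by simp
next
  fix H assume h: "wf_graph H \<and> realizes P6 H \<and> card (verts H) = card (verts Q3)"
  then obtain lam where "assembly_design H lam" "pot_of H lam \<subseteq> P6" unfolding realizes_def by blast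
  then interpret ub H lam using h by unfold_locales simp_all
  show "graph_iso Q3 H" using iso8 h by simp
qed

lemma lower6:
  assumes "is_pot P" "realizes_S3 P Q3"
  shows "6 \<le> card P"
proof -
  obtain lam where d: "assembly_design Q3 lam" "pot_of Q3 lam \<subseteq> P"
    using assms(2) unfolding realizes_S3_def realizes_def by blast
  interpret lb P lam using assms(2) d by unfold_locales
  have "finite P" using assms(1) by (simp add: is_pot_def)
  then have "card (pot_of Q3 lam) \<le> card P" using d(2) by (rule card_mono)
  then show ?thesis using pot6 by simp
qed

theorem proposition3:
  shows "T3 Q3 = 6"
  unfolding T3_def
proof (rule Least_equality)
  show "\<exists>P. is_pot P \<and> card P = 6 \<and> realizes_S3 P Q3"
    using is_pot_P6 card_P6 realizes_S3_P6 by blast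
next
  fix m assume "\<exists>P. is_pot P \<and> card P = m \<and> realizes_S3 P Q3"
  then show "6 \<le> m" using lower6 by blast
qed

end
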